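(* Let $\mathcal S\subset M_n$ be a matricial system. Then $\mathrm{Ind}_{\mathrm{CP}}(M_n:\mathcal S)^{-1}$ equals the optimal value of the semidefinite program $$\begin{aligned}&\text{minimize } \mathrm{tr}(X)\quad(X\in M_n \text{ hermitian},\ Y\in M_n\otimes\mathcal S^\perp\text{ hermitian})\\ &\text{subject to } (\mathrm{tr}\otimes\mathrm{tr})\big((I_n\otimes X+Y)\Delta_n\big)=1,\\ &\qquad I_n\otimes X+Y\in(M_n\otimes M_n)^+.\end{aligned}$$ This program is the semidefinite dual of the program maximizing $\lambda$ subject to $(\mathrm{tr}\otimes\mathrm{id})(X)=(1-\lambda)I_n$, $X+\lambda\Delta_n\in M_n\otimes\mathcal S$, $X\in(M_n\otimes M_n)^+$, and the two programs have the same optimal value.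
   Context: A matricial system is a self-adjoint subspace $\mathcal S\subset M_n$ containing $I_n$. $\mathcal S^\perp=\{A\in M_n:\mathrm{tr}(A^*B)=0\ \forall B\in\mathcal S\}$. $E_{ij}$ are matrix units, $\Delta_n=\sum_{i,j}E_{ij}\otimes E_{ij}$, $\mathrm{tr}$ is the unnormalized trace, and $M_n\otimes\mathcal S^\perp$, $M_n\otimes\mathcal S$ denote the corresponding subspaces of $M_n\otimes M_n$. For an operator system $\mathcal X$ with unit $1$, $\mathrm{CP}_1(\mathcal X)$ is the set of completely positive $\varphi:\mathcal X\to\mathcal X$ with $\varphi(\mathbb C1)\subset\mathbb C1$, and for a subsystem $\mathcal X_0$, $\mathrm{Ind}_{\mathrm{CP}}(\mathcal X:\mathcal X_0)=\inf\{\|\varphi(1)\|:\varphi\in\mathrm{CP}_1(\mathcal X),\ \varphi(\mathcal X)\subset\mathcal X_0,\ \varphi-\mathrm{id}_{\mathcal X}\text{ completely positive}\}$. *)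

theory Defs
  imports "HOL-Analysis.Analysis"
begin

text \<open>Matrices in M_n are complex^'n^'n (index type 'n of cardinality n);
  M_n \<otimes> M_n is realised as complex^('n::finite\<times>'n)^('n\<times>'n), where the row index (i,k)
  has first-factor index i and second-factor index k, i.e.
  (A \<otimes> B) at ((i,k),(j,l)) equals A i j * B k l.\<close>

definition adj :: "complex^'m^'m \<Rightarrow> complex^'m^'m" where
  "adj A = (\<chi> i j. cnj (A $ j $ i))"

definition hermitian :: "complex^'m^'m \<Rightarrow> bool" where
  "hermitian A \<longleftrightarrow> adj A = A"

definition smat :: "complex \<Rightarrow> complex^'m^'m \<Rightarrow> complex^'m^'m" where
  "smat c A = (\<chi> i j. c * A $ i $ j)"

definition mtr :: "complex^'m^'m \<Rightarrow> complex" where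
  "mtr A = (\<Sum>i\<in>UNIV. A $ i $ i)"

definition psd :: "complex^'m^'m \<Rightarrow> bool" where
  "psd Z \<longleftrightarrow> (\<forall>v::complex^'m.
      let q = (\<Sum>i\<in>UNIV. \<Sum>j\<in>UNIV. cnj (v $ i) * Z $ i $ j * v $ j)
      in Im q = 0 \<and> Re q \<ge> 0)"

definition clin :: "(complex^'n^'n \<Rightarrow> complex^'n^'n) \<Rightarrow> bool" where
  "clin \<phi> \<longleftrightarrow> (\<forall>A B. \<phi> (A + B) = \<phi> A + \<phi> B) \<and> (\<forall>c A. \<phi> (smat c A) = smat c (\<phi> A))"

text \<open>Positivity of the k\<times>k block matrix [A i j] (i,j<k) in M_k(M_n).\<close>
definition block_psd :: "nat \<Rightarrow> (nat \<Rightarrow> nat \<Rightarrow> complex^'n^'n) \<Rightarrow> bool" where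
  "block_psd k A \<longleftrightarrow> (\<forall>v::nat \<Rightarrow> complex^'n.
      let q = (\<Sum>i<k. \<Sum>j<k. \<Sum>a\<in>UNIV. \<Sum>b\<in>UNIV. cnj (v i $ a) * A i j $ a $ b * v j $ b)
      in Im q = 0 \<and> Re q \<ge> 0)"

definition CP :: "(complex^'n^'n \<Rightarrow> complex^'n^'n) \<Rightarrow> bool" where
  "CP \<phi> \<longleftrightarrow> clin \<phi> \<and> (\<forall>k A. block_psd k A \<longrightarrow> block_psd k (\<lambda>i j. \<phi> (A i j)))"

definition CP1 :: "(complex^'n^'n \<Rightarrow> complex^'n^'n) \<Rightarrow> bool" where
  "CP1 \<phi> \<longleftrightarrow> CP \<phi> \<and> (\<forall>c. \<exists>d. \<phi> (smat c (mat 1)) = smat d (mat 1))"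

definition csubspace :: "(complex^'m^'m) set \<Rightarrow> bool" where
  "csubspace V \<longleftrightarrow> 0 \<in> V \<and> (\<forall>A\<in>V. \<forall>B\<in>V. A + B \<in> V) \<and> (\<forall>c. \<forall>A\<in>V. smat c A \<in> V)"

definition matricial_system :: "(complex^'n^'n) set \<Rightarrow> bool" where
  "matricial_system S \<longleftrightarrow> csubspace S \<and> (\<forall>A\<in>S. adj A \<in> S) \<and> mat 1 \<in> S"

definition perp :: "(complex^'n^'n) set \<Rightarrow> (complex^'n^'n) set" where
  "perp S = {A. \<forall>B\<in>S. mtr (adj A ** B) = 0}"

text \<open>M_n \<otimes> V for a subspace V of M_n: matrices all of whose n\<times>n blocks
  (first tensor factor fixed) lie in V.\<close>
definition ampl :: "(complex^'n^'n) set \<Rightarrow> (complex^('n::finite\<times>'n)^('n\<times>'n)) set" where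
  "ampl V = {Z. \<forall>i j. (\<chi> k l. Z $ (i,k) $ (j,l)) \<in> V}"

text \<open>\<Delta>_n = \<Sum>_{i,j} E_ij \<otimes> E_ij.\<close>
definition Delta :: "complex^('n::finite\<times>'n)^('n\<times>'n)" where
  "Delta = (\<chi> p q. if fst p = snd p \<and> fst q = snd q then 1 else 0)"

definition idtensor :: "complex^'n^'n \<Rightarrow> complex^('n::finite\<times>'n)^('n\<times>'n)" where
  "idtensor X = (\<chi> p q. if fst p = fst q then X $ snd p $ snd q else 0)"

definition ptrace1 :: "complex^('n::finite\<times>'n)^('n\<times>'n) \<Rightarrow> complex^'n^'n" where
  "ptrace1 Z = (\<chi> k l. \<Sum>i\<in>UNIV. Z $ (i,k) $ (i,l))"

text \<open>Operator norm (w.r.t. the Euclidean norm on C^n).\<close>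
definition opnorm :: "complex^'n^'n \<Rightarrow> real" where
  "opnorm A = onorm (\<lambda>x. A *v x)"

definition Ind_CP :: "(complex^'n^'n) set \<Rightarrow> real" where
  "Ind_CP S = Inf {opnorm (\<phi> (mat 1)) | \<phi>.
      CP1 \<phi> \<and> range \<phi> \<subseteq> S \<and> CP (\<lambda>A. \<phi> A - A)}"

end

theory Submission
  imports Defs
begin


definition qf :: "complex^'m^'m \<Rightarrow> complex^'m \<Rightarrow> complex" where
  "qf Z v = (\<Sum>i\<in>UNIV. \<Sum>j\<in>UNIV. cnj (v $ i) * Z $ i $ j * v $ j)"

definition ci :: "complex^'m^'m \<Rightarrow> complex^'m^'m \<Rightarrow> complex" where
  "ci A B = (\<Sum>i\<in>UNIV. \<Sum>j\<in>UNIV. cnj (A $ i $ j) * B $ i $ j)"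

definition outer :: "complex^'m \<Rightarrow> complex^'m^'m" where
  "outer w = (\<chi> p q. w $ p * cnj (w $ q))"

lemma psd_qf: "psd Z \<longleftrightarrow> (\<forall>v. Im (qf Z v) = 0 \<and> 0 \<le> Re (qf Z v))"
  unfolding psd_def qf_def Let_def by simp

lemma inner_mat: "inner (A::complex^'m^'m) B = Re (ci A B)"
  unfolding ci_def inner_vec_def inner_complex_def Re_sum by simp

lemma hermitian_iff: "hermitian Z \<longleftrightarrow> (\<forall>i j. Z $ j $ i = cnj (Z $ i $ j))"
proof -
  have "hermitian Z \<longleftrightarrow> (\<forall>i j. cnj (Z $ j $ i) = Z $ i $ j)"
    unfolding hermitian_def adj_def vec_eq_iff by simp
  also have "\<dots> \<longleftrightarrow> (\<forall>i j. Z $ j $ i = cnj (Z $ i $ j))"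
    by (metis complex_cnj_cnj)
  finally show ?thesis .
qed

lemma axis_nth: "axis i a $ j = (if j = i then a else 0)"
  by (simp add: axis_def)

lemma qf_axis: "qf Z (axis i a) = cnj a * Z $ i $ i * a"
  unfolding qf_def axis_nth by (simp add: if_distrib[of "\<lambda>x. _ * x"] if_distrib[of cnj] if_distrib[of "\<lambda>x. x * _"] cong: if_cong)

lemma qf_axis2: assumes "i \<noteq> j"
  shows "qf Z (axis i a + axis j b) =
     cnj a * Z $ i $ i * a + cnj a * Z $ i $ j * b + cnj b * Z $ j $ i * a + cnj b * Z $ j $ j * b"
  using assms unfolding qf_def vector_add_component axis_nth
  by (simp add: distrib_left distrib_right sum.distrib if_distrib[of "\<lambda>x. _ * x"] if_distrib[of cnj] if_distrib[of "\<lambda>x. x * _"] cong: if_cong)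

lemma psd_hermitian: assumes "psd Z" shows "hermitian Z"
proof -
  have q: "Im (qf Z v) = 0" for v using assms psd_qf by blast
  have "Z $ j $ i = cnj (Z $ i $ j)" for i j
  proof (cases "i = j")
    case True
    then show ?thesis using q[of "axis i 1"] by (simp add: qf_axis complex_eq_iff)
  next
    case False
    have d1: "Im (Z $ i $ i) = 0" "Im (Z $ j $ j) = 0"
      using q[of "axis i 1"] q[of "axis j 1"] by (simp_all add: qf_axis)
    have "Im (Z $ i $ j + Z $ j $ i) = 0"
      using q[of "axis i 1 + axis j 1"] d1 qf_axis2[OF False, of Z 1 1] by simp
    moreover have "Re (Z $ i $ j) - Re (Z $ j $ i) = 0"
      using q[of "axis i 1 + axis j \<i>"] d1 qf_axis2[OF False, of Z 1 \<i>] by simp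
    ultimately show ?thesis by (simp add: complex_eq_iff)
  qed
  then show ?thesis unfolding hermitian_iff by blast
qed

lemma hermitian_qf_real: assumes "hermitian Z" shows "Im (qf Z v) = 0"
proof -
  have h: "\<And>i j. cnj (Z $ i $ j) = Z $ j $ i" using assms hermitian_iff by (metis complex_cnj_cnj)
  have "cnj (qf Z v) = (\<Sum>i\<in>UNIV. \<Sum>j\<in>UNIV. v $ i * Z $ j $ i * cnj (v $ j))"
    unfolding qf_def by (simp add: h)
  also have "\<dots> = qf Z v" unfolding qf_def by (subst sum.swap) (simp add: mult_ac)
  finally show ?thesis by (metis Reals_cnj_iff complex_is_Real_iff)
qed



lemma psd_diag: assumes "psd Z" shows "Im (Z $ i $ i) = 0" "0 \<le> Re (Z $ i $ i)"
  using assms[unfolded psd_qf] qf_axis[of Z i 1] by (metis complex_cnj_one mult_1 mult_1_right)+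

lemma psd_zero_row: assumes "psd Z" "Z $ i $ i = 0" shows "Z $ i $ j = 0"
proof (rule ccontr)
  assume nz: "Z $ i $ j \<noteq> 0"
  then have ij: "i \<noteq> j" using assms by auto
  define z where "z = Z $ i $ j"
  have h: "Z $ j $ i = cnj z" using psd_hermitian[OF assms(1)] hermitian_iff z_def by blast
  have n: "0 < (Re z)\<^sup>2 + (Im z)\<^sup>2" using nz z_def complex_neq_0 by blast
  define t where "t = (Re (Z $ j $ j) + 1) / (2 * ((Re z)\<^sup>2 + (Im z)\<^sup>2))"
  define a where "a = - (complex_of_real t) * z"
  have "0 \<le> Re (qf Z (axis i a + axis j 1))" using assms(1) psd_qf by blast
  also have "qf Z (axis i a + axis j 1) = cnj a * z + cnj z * a + Z $ j $ j"
    using qf_axis2[OF ij, of Z a 1] assms(2) h z_def by simp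
  also have "Re \<dots> = Re (Z $ j $ j) - 2 * t * ((Re z)\<^sup>2 + (Im z)\<^sup>2)"
    unfolding a_def by (simp add: power2_eq_square algebra_simps)
  also have "\<dots> = -1" unfolding t_def using n by (simp add: field_simps)
  finally show False by simp
qed

lemma psd_zero_col: assumes "psd Z" "Z $ i $ i = 0" shows "Z $ j $ i = 0"
  using psd_zero_row[OF assms, of j] psd_hermitian[OF assms(1)] hermitian_iff by (metis complex_cnj_zero)

lemma qf_diff: "qf (A - B) v = qf A v - qf B v"
  unfolding qf_def by (simp add: algebra_simps sum_subtractf)

lemma qf_add: "qf (A + B) v = qf A v + qf B v"
  unfolding qf_def by (simp add: algebra_simps sum.distrib)

lemma qf_sum: "finite K \<Longrightarrow> qf (\<Sum>r\<in>K. A r) v = (\<Sum>r\<in>K. qf (A r) v)"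
  apply (induction K rule: finite_induct)
   apply (simp add: qf_def)
  apply (simp add: qf_add)
  done

lemma qf_outer: "qf (outer w) v = cnj (\<Sum>i\<in>UNIV. v $ i * cnj (w $ i)) * (\<Sum>i\<in>UNIV. v $ i * cnj (w $ i))"
  unfolding qf_def outer_def by (simp add: sum_distrib_left sum_distrib_right mult_ac)

lemma cnj_mult_self: "Im (cnj x * x) = 0 \<and> 0 \<le> Re (cnj x * x)"
  by simp

lemma psd_outer: "psd (outer w)"
  unfolding psd_qf qf_outer using cnj_mult_self by blast

lemma sum_if_cond: "(\<Sum>j\<in>A. if P then f j else 0) = (if P then (\<Sum>j\<in>A. f j) else 0)"
  by simp

lemma qf_shift: "qf C (v + axis r s) = qf C v + cnj s * (\<Sum>j\<in>UNIV. C $ r $ j * v $ j)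
   + (\<Sum>i\<in>UNIV. cnj (v $ i) * C $ i $ r) * s + cnj s * C $ r $ r * s"
  unfolding qf_def vector_add_component axis_nth
  by (simp add: distrib_left distrib_right sum.distrib if_distrib[of "\<lambda>x. _ * x"] if_distrib[of cnj] if_distrib[of "\<lambda>x. x * _"] sum_distrib_left sum_if_cond mult_ac cong: if_cong)



lemma outer_nth: "outer w $ p $ q = w $ p * cnj (w $ q)" by (simp add: outer_def)

lemma outer_zero: "outer 0 = 0" by (simp add: outer_def vec_eq_iff)

lemma decomp_aux:
  fixes C :: "complex^'m^'m"
  assumes "finite K"
  shows "psd C \<Longrightarrow> (\<forall>i j. i \<notin> K \<or> j \<notin> K \<longrightarrow> C $ i $ j = 0) \<Longrightarrow> \<exists>w. C = (\<Sum>r\<in>K. outer (w r))"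
  using assms
proof (induction K arbitrary: C rule: finite_induct)
  case empty
  then show ?case by (simp add: vec_eq_iff)
next
  case (insert r K)
  have herm: "\<And>i j. cnj (C $ i $ j) = C $ j $ i" using psd_hermitian[OF insert.prems(1)] hermitian_iff by (metis complex_cnj_cnj)
  show ?case
  proof (cases "C $ r $ r = 0")
    case True
    have "\<forall>i j. i \<notin> K \<or> j \<notin> K \<longrightarrow> C $ i $ j = 0"
    proof (intro allI impI)
      fix i j assume a: "i \<notin> K \<or> j \<notin> K"
      show "C $ i $ j = 0"
      proof (cases "i = r")
        case True
        then show ?thesis using psd_zero_row[OF insert.prems(1) \<open>C $ r $ r = 0\<close>] by simp
      next
        case F1: False
        show ?thesis
        proof (cases "j = r")
          case True
          then show ?thesis using psd_zero_col[OF insert.prems(1) \<open>C $ r $ r = 0\<close>] by simp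
        next
          case False
          then show ?thesis using F1 a insert.prems(2) by blast
        qed
      qed
    qed
    then obtain w where w: "C = (\<Sum>x\<in>K. outer (w x))" using insert.IH insert.prems(1) by blast
    have "(\<Sum>x\<in>insert r K. outer ((w(r:=0)) x)) = (\<Sum>x\<in>K. outer ((w(r:=0)) x))"
      using insert.hyps by (simp add: outer_zero)
    also have "\<dots> = C" unfolding w using insert.hyps(2) by (intro sum.cong) auto
    finally have "C = (\<Sum>x\<in>insert r K. outer ((w(r:=0)) x))" by simp
    then show ?thesis by (intro exI[of _ "w(r:=0)"])
  next
    case False
    define c where "c = Re (C $ r $ r)"
    have cr: "C $ r $ r = complex_of_real c" using psd_diag[OF insert.prems(1), of r] c_def
      by (simp add: complex_eq_iff)
    have "c \<noteq> 0" using False cr by auto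
    then have cpos: "0 < c" using psd_diag[OF insert.prems(1), of r] c_def by linarith
    define w0 where "w0 = (\<chi> p. C $ p $ r / complex_of_real (sqrt c))"
    have ow: "outer w0 $ p $ q = C $ p $ r * C $ r $ q / C $ r $ r" for p q
    proof -
      have "outer w0 $ p $ q = C $ p $ r * cnj (C $ q $ r) / (complex_of_real (sqrt c) * complex_of_real (sqrt c))"
        by (simp add: outer_nth w0_def)
      also have "complex_of_real (sqrt c) * complex_of_real (sqrt c) = complex_of_real c"
        unfolding of_real_mult[symmetric] using cpos by simp
      finally show ?thesis using cr herm by simp
    qed
    define C' where "C' = C - outer w0"
    have supp: "\<forall>i j. i \<notin> K \<or> j \<notin> K \<longrightarrow> C' $ i $ j = 0"
    proof (intro allI impI)
      fix i j assume a: "i \<notin> K \<or> j \<notin> K"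
      show "C' $ i $ j = 0"
      proof (cases "i = r \<or> j = r")
        case True
        then show ?thesis unfolding C'_def using False by (auto simp: ow)
      next
        case F2: False
        then have "C $ i $ j = 0" "C $ i $ r = 0 \<or> C $ r $ j = 0"
          using insert.prems(2) a by auto
        then show ?thesis unfolding C'_def by (auto simp: ow)
      qed
    qed
    have psdC': "psd C'"
      unfolding psd_qf
    proof
      fix v
      define a where "a = (\<Sum>j\<in>UNIV. C $ r $ j * v $ j)"
      have a2: "(\<Sum>i\<in>UNIV. cnj (v $ i) * C $ i $ r) = cnj a"
        unfolding a_def by (simp add: herm mult.commute)
      have qo: "qf (outer w0) v = cnj a * a / C $ r $ r"
      proof -
        have "qf (outer w0) v = (\<Sum>i\<in>UNIV. \<Sum>j\<in>UNIV. (cnj (v $ i) * C $ i $ r) * (C $ r $ j * v $ j) / C $ r $ r)"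
          unfolding qf_def ow by (simp add: mult_ac)
        also have "\<dots> = (\<Sum>i\<in>UNIV. cnj (v $ i) * C $ i $ r) * (\<Sum>j\<in>UNIV. C $ r $ j * v $ j) / C $ r $ r"
          by (simp add: sum_product sum_divide_distrib)
        finally show ?thesis using a2 a_def by simp
      qed
      define s where "s = - a / C $ r $ r"
      have "qf C (v + axis r s) = qf C v + cnj s * a + cnj a * s + cnj s * C $ r $ r * s"
        using qf_shift[of C v r s] a2 a_def by simp
      also have "\<dots> = qf C v - cnj a * a / C $ r $ r"
        unfolding s_def using cr cpos by (simp add: field_simps)
      finally have "qf C' v = qf C (v + axis r s)" unfolding C'_def qf_diff qo by simp
      then show "Im (qf C' v) = 0 \<and> 0 \<le> Re (qf C' v)" using insert.prems(1) psd_qf by metis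
    qed
    obtain w where w: "C' = (\<Sum>x\<in>K. outer (w x))" using insert.IH[OF psdC' supp] by blast
    have "(\<Sum>x\<in>insert r K. outer ((w(r:=w0)) x)) = outer w0 + (\<Sum>x\<in>K. outer ((w(r:=w0)) x))"
      using insert.hyps by simp
    also have "(\<Sum>x\<in>K. outer ((w(r:=w0)) x)) = C'" unfolding w using insert.hyps(2) by (intro sum.cong) auto
    finally have "C = (\<Sum>x\<in>insert r K. outer ((w(r:=w0)) x))" unfolding C'_def by simp
    then show ?thesis by (intro exI[of _ "w(r:=w0)"])
  qed
qed

lemma psd_decomp:
  fixes C :: "complex^'m^'m"
  assumes "psd C" shows "\<exists>w::'m \<Rightarrow> complex^'m. C = (\<Sum>r\<in>UNIV. outer (w r))"
  using decomp_aux[of "UNIV::'m set" C] assms by simp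

lemma ci_sum_right: "finite K \<Longrightarrow> ci A (\<Sum>r\<in>K. B r) = (\<Sum>r\<in>K. ci A (B r))"
  by (induction K rule: finite_induct) (auto simp: ci_def distrib_left sum.distrib)

lemma ci_outer: "ci P (outer w) = cnj (qf P w)"
  unfolding ci_def qf_def outer_def by (simp add: mult_ac)

lemma inner_psd_nonneg:
  fixes P Q :: "complex^'m^'m"
  assumes "psd P" "psd Q" shows "0 \<le> inner P Q"
proof -
  obtain w :: "'m \<Rightarrow> complex^'m" where w: "Q = (\<Sum>r\<in>UNIV. outer (w r))" using psd_decomp[OF assms(2)] by blast
  have fin: "finite (UNIV::'m set)" by simp
  have "inner P Q = (\<Sum>r\<in>UNIV. Re (qf P (w r)))"
    unfolding inner_mat w ci_sum_right[OF fin] ci_outer Re_sum by simp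
  also have "\<dots> \<ge> 0" using assms(1) psd_qf by (meson sum_nonneg)
  finally show ?thesis .
qed



lemma sum_swap3: "(\<Sum>i\<in>A. \<Sum>j\<in>B. \<Sum>r\<in>C. g i j r) = (\<Sum>r\<in>C. \<Sum>i\<in>A. \<Sum>j\<in>B. g i j r)"
proof -
  have "(\<Sum>i\<in>A. \<Sum>j\<in>B. \<Sum>r\<in>C. g i j r) = (\<Sum>i\<in>A. \<Sum>r\<in>C. \<Sum>j\<in>B. g i j r)"
    by (intro sum.cong refl sum.swap)
  also have "\<dots> = (\<Sum>r\<in>C. \<Sum>i\<in>A. \<Sum>j\<in>B. g i j r)" by (rule sum.swap)
  finally show ?thesis .
qed

lemma sum_swap22: "(\<Sum>x\<in>A. \<Sum>y\<in>B. \<Sum>i\<in>C. \<Sum>j\<in>D. g x y i j) = (\<Sum>i\<in>C. \<Sum>j\<in>D. \<Sum>x\<in>A. \<Sum>y\<in>B. g x y i j)"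
proof -
  have "(\<Sum>x\<in>A. \<Sum>y\<in>B. \<Sum>i\<in>C. \<Sum>j\<in>D. g x y i j) = (\<Sum>i\<in>C. \<Sum>x\<in>A. \<Sum>y\<in>B. \<Sum>j\<in>D. g x y i j)"
    by (rule sum_swap3)
  also have "\<dots> = (\<Sum>i\<in>C. \<Sum>j\<in>D. \<Sum>x\<in>A. \<Sum>y\<in>B. g x y i j)"
    by (intro sum.cong refl sum_swap3)
  finally show ?thesis .
qed

lemma reorder5:
  "(\<Sum>x\<in>A. \<Sum>y\<in>B. \<Sum>i\<in>C. \<Sum>j\<in>D. \<Sum>r\<in>E. f x y i j r)
       = (\<Sum>r\<in>E. \<Sum>i\<in>C. \<Sum>j\<in>D. \<Sum>x\<in>A. \<Sum>y\<in>B. f x y i j r)"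
proof -
  have "(\<Sum>x\<in>A. \<Sum>y\<in>B. \<Sum>i\<in>C. \<Sum>j\<in>D. \<Sum>r\<in>E. f x y i j r)
     = (\<Sum>x\<in>A. \<Sum>y\<in>B. \<Sum>r\<in>E. \<Sum>i\<in>C. \<Sum>j\<in>D. f x y i j r)"
    by (intro sum.cong refl sum_swap3)
  also have "\<dots> = (\<Sum>r\<in>E. \<Sum>x\<in>A. \<Sum>y\<in>B. \<Sum>i\<in>C. \<Sum>j\<in>D. f x y i j r)"
    by (rule sum_swap3)
  also have "\<dots> = (\<Sum>r\<in>E. \<Sum>i\<in>C. \<Sum>j\<in>D. \<Sum>x\<in>A. \<Sum>y\<in>B. f x y i j r)"
    by (intro sum.cong refl sum_swap22)
  finally show ?thesis .
qed



definition E :: "'n \<Rightarrow> 'n \<Rightarrow> complex^'n^'n" where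
  "E i j = (\<chi> a b. if a = i \<and> b = j then 1 else 0)"

definition choi :: "(complex^'n^'n \<Rightarrow> complex^'n^'n) \<Rightarrow> complex^('n\<times>'n)^('n\<times>'n)" where
  "choi f = (\<chi> p q. f (E (fst p) (fst q)) $ snd p $ snd q)"

definition phiC :: "complex^('n\<times>'n)^('n\<times>'n) \<Rightarrow> complex^'n^'n \<Rightarrow> complex^'n^'n" where
  "phiC C A = (\<chi> k l. \<Sum>i\<in>UNIV. \<Sum>j\<in>UNIV. A $ i $ j * C $ (i,k) $ (j,l))"

definition Uv :: "complex^('n\<times>'n) \<Rightarrow> complex^'n \<Rightarrow> complex^'n" where
  "Uv w p = (\<chi> i. \<Sum>x\<in>UNIV. p $ x * cnj (w $ (i,x)))"

lemma key_ab:
  fixes w :: "'r::finite \<Rightarrow> complex^('n::finite\<times>'n)"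
  shows "(\<Sum>x\<in>UNIV. \<Sum>y\<in>UNIV. cnj (p $ x) * (\<Sum>i\<in>UNIV. \<Sum>j\<in>UNIV. M $ i $ j * (\<Sum>r\<in>UNIV. w r $ (i,x) * cnj (w r $ (j,y)))) * q $ y)
   = (\<Sum>r\<in>UNIV. \<Sum>i\<in>UNIV. \<Sum>j\<in>UNIV. cnj (Uv (w r) p $ i) * M $ i $ j * Uv (w r) q $ j)"
proof -
  have "(\<Sum>x\<in>UNIV. \<Sum>y\<in>UNIV. cnj (p $ x) * (\<Sum>i\<in>UNIV. \<Sum>j\<in>UNIV. M $ i $ j * (\<Sum>r\<in>UNIV. w r $ (i,x) * cnj (w r $ (j,y)))) * q $ y)
     = (\<Sum>x\<in>UNIV. \<Sum>y\<in>UNIV. \<Sum>i\<in>UNIV. \<Sum>j\<in>UNIV. \<Sum>r\<in>UNIV. cnj (p $ x) * w r $ (i,x) * M $ i $ j * (q $ y * cnj (w r $ (j,y))))"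
    by (simp add: sum_distrib_left sum_distrib_right mult_ac)
  also have "\<dots> = (\<Sum>r\<in>UNIV. \<Sum>i\<in>UNIV. \<Sum>j\<in>UNIV. \<Sum>x\<in>UNIV. \<Sum>y\<in>UNIV. cnj (p $ x) * w r $ (i,x) * M $ i $ j * (q $ y * cnj (w r $ (j,y))))"
    by (rule reorder5)
  also have "\<dots> = (\<Sum>r\<in>UNIV. \<Sum>i\<in>UNIV. \<Sum>j\<in>UNIV. cnj (Uv (w r) p $ i) * M $ i $ j * Uv (w r) q $ j)"
    unfolding Uv_def by (simp add: sum_distrib_left sum_distrib_right mult_ac)
  finally show ?thesis .
qed

lemma phiC_nth: "phiC C A $ k $ l = (\<Sum>i\<in>UNIV. \<Sum>j\<in>UNIV. A $ i $ j * C $ (i,k) $ (j,l))"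
  by (simp add: phiC_def)

lemma smat_nth: "smat c A $ i $ j = c * A $ i $ j"
  by (simp add: smat_def)

lemma clin_phiC: "clin (phiC C)"
  unfolding clin_def
  by (simp add: vec_eq_iff phiC_nth smat_nth distrib_right sum.distrib sum_distrib_left mult.assoc)

lemma block_psd_iff: "block_psd k A \<longleftrightarrow> (\<forall>v. Im (\<Sum>i<k. \<Sum>j<k. \<Sum>a\<in>UNIV. \<Sum>b\<in>UNIV. cnj (v i $ a) * A i j $ a $ b * v j $ b) = 0
   \<and> 0 \<le> Re (\<Sum>i<k. \<Sum>j<k. \<Sum>a\<in>UNIV. \<Sum>b\<in>UNIV. cnj (v i $ a) * A i j $ a $ b * v j $ b))"
  unfolding block_psd_def Let_def by simp

lemma CP_phiC:
  fixes C :: "complex^('n::finite\<times>'n)^('n\<times>'n)"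
  assumes "psd C" shows "CP (phiC C)"
proof -
  obtain w :: "'n\<times>'n \<Rightarrow> complex^('n\<times>'n)" where w: "C = (\<Sum>r\<in>UNIV. outer (w r))"
    using psd_decomp[OF assms] by blast
  have Cn: "C $ (i,x) $ (j,y) = (\<Sum>r\<in>UNIV. w r $ (i,x) * cnj (w r $ (j,y)))" for i x j y
    unfolding w by (simp add: outer_nth)
  have "block_psd k (\<lambda>a b. phiC C (A a b))" if A: "block_psd k A" for k A
    unfolding block_psd_iff
  proof
    fix v :: "nat \<Rightarrow> complex^'n"
    define u where "u r a = Uv (w r) (v a)" for r a
    have eq: "(\<Sum>a<k. \<Sum>b<k. \<Sum>x\<in>UNIV. \<Sum>y\<in>UNIV. cnj (v a $ x) * phiC C (A a b) $ x $ y * v b $ y)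
        = (\<Sum>r\<in>UNIV. \<Sum>a<k. \<Sum>b<k. \<Sum>i\<in>UNIV. \<Sum>j\<in>UNIV. cnj (u r a $ i) * A a b $ i $ j * u r b $ j)"
    proof -
      have "(\<Sum>a<k. \<Sum>b<k. \<Sum>x\<in>UNIV. \<Sum>y\<in>UNIV. cnj (v a $ x) * phiC C (A a b) $ x $ y * v b $ y)
         = (\<Sum>a<k. \<Sum>b<k. \<Sum>r\<in>UNIV. \<Sum>i\<in>UNIV. \<Sum>j\<in>UNIV. cnj (u r a $ i) * A a b $ i $ j * u r b $ j)"
        unfolding phiC_nth Cn u_def by (intro sum.cong refl key_ab)
      also have "\<dots> = (\<Sum>r\<in>UNIV. \<Sum>a<k. \<Sum>b<k. \<Sum>i\<in>UNIV. \<Sum>j\<in>UNIV. cnj (u r a $ i) * A a b $ i $ j * u r b $ j)"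
        by (rule sum_swap3)
      finally show ?thesis .
    qed
    have each: "Im (\<Sum>a<k. \<Sum>b<k. \<Sum>i\<in>UNIV. \<Sum>j\<in>UNIV. cnj (u r a $ i) * A a b $ i $ j * u r b $ j) = 0
        \<and> 0 \<le> Re (\<Sum>a<k. \<Sum>b<k. \<Sum>i\<in>UNIV. \<Sum>j\<in>UNIV. cnj (u r a $ i) * A a b $ i $ j * u r b $ j)" for r
      using A unfolding block_psd_iff by blast
    show "Im (\<Sum>a<k. \<Sum>b<k. \<Sum>x\<in>UNIV. \<Sum>y\<in>UNIV. cnj (v a $ x) * phiC C (A a b) $ x $ y * v b $ y) = 0 \<and>
          0 \<le> Re (\<Sum>a<k. \<Sum>b<k. \<Sum>x\<in>UNIV. \<Sum>y\<in>UNIV. cnj (v a $ x) * phiC C (A a b) $ x $ y * v b $ y)"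
      unfolding eq Im_sum Re_sum using each by (simp add: sum_nonneg)
  qed
  then show ?thesis unfolding CP_def using clin_phiC by blast
qed



definition blk :: "complex^('n::finite\<times>'n)^('n\<times>'n) \<Rightarrow> 'n \<Rightarrow> 'n \<Rightarrow> complex^'n^'n" where
  "blk Z i j = (\<chi> k l. Z $ (i,k) $ (j,l))"

lemma E_nth: "E i j $ a $ b = (if a = i \<and> b = j then 1 else 0)" by (simp add: E_def)

lemma mult_if1: "c * (if P then 1 else 0) = (if P then c else (0::complex))" by simp
lemma if0_mult: "(if P then c else 0) * y = (if P then c * y else (0::complex))" by simp

lemma E_form: "(\<Sum>a\<in>UNIV. \<Sum>b\<in>UNIV. cnj (x $ a) * E s t $ a $ b * y $ b) = cnj (x $ s) * y $ t"
proof -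
  have inner: "(\<Sum>b\<in>UNIV. cnj (x $ a) * E s t $ a $ b * y $ b) = (if a = s then cnj (x $ a) * y $ t else 0)" for a
  proof (cases "a = s")
    case True
    then have "(\<Sum>b\<in>UNIV. cnj (x $ a) * E s t $ a $ b * y $ b) = (\<Sum>b\<in>UNIV. if b = t then cnj (x $ a) * y $ b else 0)"
      by (intro sum.cong refl) (simp add: E_nth)
    also have "\<dots> = cnj (x $ a) * y $ t" by simp
    finally show ?thesis using True by simp
  next
    case False
    then show ?thesis by (simp add: E_nth)
  qed
  show ?thesis unfolding inner by simp
qed

lemma sum_pair: "(\<Sum>p\<in>(UNIV::('a::finite \<times> 'b::finite) set). f p) = (\<Sum>a\<in>UNIV. \<Sum>b\<in>UNIV. f (a,b))"
proof -
  have "(\<Sum>a\<in>UNIV. \<Sum>b\<in>UNIV. f (a,b)) = (\<Sum>(a,b)\<in>(UNIV::'a set)\<times>(UNIV::'b set). f (a,b))"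
    by (rule sum.cartesian_product)
  then show ?thesis by simp
qed
lemma CP_choi_psd:
  fixes \<phi> :: "complex^'n^'n \<Rightarrow> complex^'n^'n"
  assumes "CP \<phi>" shows "psd (choi \<phi>)"
proof -
  define k where "k = CARD('n)"
  obtain h where bij: "bij_betw h {..<k} (UNIV::'n set)"
    using ex_bij_betw_nat_finite[of "UNIV::'n set"] unfolding k_def atLeast0LessThan by auto
  define A where "A i j = E (h i) (h j)" for i j
  have "block_psd k A"
    unfolding block_psd_iff
  proof
    fix v :: "nat \<Rightarrow> complex^'n"
    have "(\<Sum>i<k. \<Sum>j<k. \<Sum>a\<in>UNIV. \<Sum>b\<in>UNIV. cnj (v i $ a) * A i j $ a $ b * v j $ b)
       = (\<Sum>i<k. \<Sum>j<k. cnj (v i $ h i) * v j $ h j)"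
      unfolding A_def E_form by simp
    also have "\<dots> = cnj (\<Sum>i<k. v i $ h i) * (\<Sum>j<k. v j $ h j)"
      by (simp add: sum_product)
    finally have eq: "(\<Sum>i<k. \<Sum>j<k. \<Sum>a\<in>UNIV. \<Sum>b\<in>UNIV. cnj (v i $ a) * A i j $ a $ b * v j $ b) = cnj (\<Sum>i<k. v i $ h i) * (\<Sum>j<k. v j $ h j)" .
    show "Im (\<Sum>i<k. \<Sum>j<k. \<Sum>a\<in>UNIV. \<Sum>b\<in>UNIV. cnj (v i $ a) * A i j $ a $ b * v j $ b) = 0 \<and>
       0 \<le> Re (\<Sum>i<k. \<Sum>j<k. \<Sum>a\<in>UNIV. \<Sum>b\<in>UNIV. cnj (v i $ a) * A i j $ a $ b * v j $ b)"
      unfolding eq by (rule cnj_mult_self)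
  qed
  then have bp: "block_psd k (\<lambda>i j. \<phi> (A i j))" using assms unfolding CP_def by blast
  show ?thesis unfolding psd_qf
  proof
    fix z :: "complex^('n\<times>'n)"
    define v where "v i = (\<chi> x. z $ (h i, x))" for i
    have "(\<Sum>i<k. \<Sum>j<k. \<Sum>a\<in>UNIV. \<Sum>b\<in>UNIV. cnj (v i $ a) * \<phi> (A i j) $ a $ b * v j $ b)
      = (\<Sum>i<k. \<Sum>j<k. (\<lambda>t u. \<Sum>a\<in>UNIV. \<Sum>b\<in>UNIV. cnj (z $ (t, a)) * \<phi> (E t u) $ a $ b * z $ (u, b)) (h i) (h j))"
      unfolding v_def A_def by simp
    also have "\<dots> = (\<Sum>i<k. (\<lambda>t. \<Sum>u\<in>UNIV. \<Sum>a\<in>UNIV. \<Sum>b\<in>UNIV. cnj (z $ (t, a)) * \<phi> (E t u) $ a $ b * z $ (u, b)) (h i))"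
      by (intro sum.cong refl) (rule sum.reindex_bij_betw[OF bij])
    also have "\<dots> = (\<Sum>t\<in>UNIV. \<Sum>u\<in>UNIV. \<Sum>a\<in>UNIV. \<Sum>b\<in>UNIV. cnj (z $ (t, a)) * \<phi> (E t u) $ a $ b * z $ (u, b))"
      by (rule sum.reindex_bij_betw[OF bij])
    also have "\<dots> = (\<Sum>t\<in>UNIV. \<Sum>a\<in>UNIV. \<Sum>u\<in>UNIV. \<Sum>b\<in>UNIV. cnj (z $ (t, a)) * \<phi> (E t u) $ a $ b * z $ (u, b))"
      by (intro sum.cong refl sum.swap)
    also have "\<dots> = qf (choi \<phi>) z"
      unfolding qf_def sum_pair choi_def by simp
    finally have eq: "(\<Sum>i<k. \<Sum>j<k. \<Sum>a\<in>UNIV. \<Sum>b\<in>UNIV. cnj (v i $ a) * \<phi> (A i j) $ a $ b * v j $ b) = qf (choi \<phi>) z" .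
    show "Im (qf (choi \<phi>) z) = 0 \<and> 0 \<le> Re (qf (choi \<phi>) z)"
      using bp[unfolded block_psd_iff, rule_format, of v] unfolding eq .
  qed
qed



lemma choi_minus_id: "choi (\<lambda>A. \<phi> A - A) = choi \<phi> - Delta"
  by (auto simp: vec_eq_iff choi_def Delta_def E_nth)

lemma smat_zero_left: "smat 0 A = 0" by (simp add: smat_def vec_eq_iff)

lemma clin_zero: assumes "clin \<phi>" shows "\<phi> 0 = 0"
proof -
  have "\<phi> 0 = \<phi> (smat 0 0)" by (simp add: smat_zero_left)
  also have "\<dots> = smat 0 (\<phi> 0)" using assms clin_def by blast
  finally show ?thesis by (simp add: smat_zero_left)
qed

lemma clin_sum: assumes "clin \<phi>" "finite K" shows "\<phi> (\<Sum>x\<in>K. X x) = (\<Sum>x\<in>K. \<phi> (X x))"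
  using assms(2)
proof (induction K rule: finite_induct)
  case empty then show ?case using clin_zero[OF assms(1)] by simp
next
  case (insert x F)
  then show ?case using assms(1) unfolding clin_def by simp
qed

lemma sum_E: "(\<Sum>i\<in>UNIV. E i i) = mat 1"
proof -
  have "(\<Sum>x\<in>UNIV. E x x $ a $ b) = mat 1 $ a $ b" for a b
  proof -
    have "(\<Sum>x\<in>UNIV. E x x $ a $ b) = (\<Sum>x\<in>UNIV. if x = a then (if a = b then 1 else 0) else 0)"
      by (intro sum.cong refl) (auto simp: E_nth)
    also have "\<dots> = mat 1 $ a $ b" by (simp add: mat_def)
    finally show ?thesis .
  qed
  then show ?thesis unfolding vec_eq_iff sum_component by blast
qed

lemma ptrace1_choi: assumes "clin \<phi>" shows "ptrace1 (choi \<phi>) = \<phi> (mat 1)"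
proof -
  have "ptrace1 (choi \<phi>) = (\<Sum>i\<in>UNIV. \<phi> (E i i))"
    by (simp add: vec_eq_iff ptrace1_def choi_def)
  also have "\<dots> = \<phi> (\<Sum>i\<in>UNIV. E i i)" by (rule clin_sum[OF assms, symmetric]) simp
  finally show ?thesis by (simp add: sum_E)
qed

lemma blk_nth: "blk Z i j $ k $ l = Z $ (i,k) $ (j,l)" by (simp add: blk_def)

lemma blk_choi: "blk (choi \<phi>) i j = \<phi> (E i j)"
  by (simp add: vec_eq_iff blk_def choi_def)

lemma phiC_Delta: "phiC Delta A = A"
proof -
  have "(\<Sum>i\<in>UNIV. \<Sum>j\<in>UNIV. A $ i $ j * Delta $ (i,k) $ (j,l)) = A $ k $ l" for k l
  proof -
    have "(\<Sum>i\<in>UNIV. \<Sum>j\<in>UNIV. A $ i $ j * Delta $ (i,k) $ (j,l))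
       = (\<Sum>i\<in>UNIV. if i = k then (\<Sum>j\<in>UNIV. if j = l then A $ i $ j else 0) else 0)"
      by (intro sum.cong refl) (auto simp: Delta_def mult_if1)
    also have "\<dots> = A $ k $ l" by simp
    finally show ?thesis .
  qed
  then show ?thesis by (simp add: vec_eq_iff phiC_nth del: sum.delta)
qed

lemma phiC_add_left: "phiC (C + D) A = phiC C A + phiC D A"
  by (simp add: vec_eq_iff phiC_nth distrib_left sum.distrib)

lemma phiC_smat_left: "phiC (smat c C) A = smat c (phiC C A)"
  by (simp add: vec_eq_iff phiC_nth smat_nth sum_distrib_left mult_ac)

lemma phiC_one: "phiC C (mat 1) = ptrace1 C"
proof -
  have "(\<Sum>i\<in>UNIV. \<Sum>j\<in>UNIV. mat 1 $ i $ j * C $ (i,k) $ (j,l)) = (\<Sum>i\<in>UNIV. C $ (i,k) $ (i,l))" for k l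
  proof -
    have "(\<Sum>i\<in>UNIV. \<Sum>j\<in>UNIV. mat 1 $ i $ j * C $ (i,k) $ (j,l))
       = (\<Sum>i\<in>UNIV. \<Sum>j\<in>UNIV. if j = i then C $ (i,k) $ (j,l) else 0)"
      by (intro sum.cong refl) (auto simp: mat_def)
    also have "\<dots> = (\<Sum>i\<in>UNIV. C $ (i,k) $ (i,l))" by simp
    finally show ?thesis .
  qed
  then show ?thesis by (simp add: vec_eq_iff phiC_nth ptrace1_def)
qed

lemma phiC_blocks: "phiC C A = (\<Sum>i\<in>UNIV. \<Sum>j\<in>UNIV. smat (A $ i $ j) (blk C i j))"
  by (simp add: vec_eq_iff phiC_nth smat_nth blk_nth)

lemma csubspace_sum: assumes "csubspace V" "finite K" "\<And>x. x \<in> K \<Longrightarrow> X x \<in> V"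
  shows "(\<Sum>x\<in>K. X x) \<in> V"
  using assms(2,3)
proof (induction K rule: finite_induct)
  case empty then show ?case using assms(1) unfolding csubspace_def by simp
next
  case (insert x F) then show ?case using assms(1) unfolding csubspace_def by simp
qed

lemma qf_smat: "qf (smat c X) v = c * qf X v"
  unfolding qf_def smat_nth by (simp add: sum_distrib_left mult_ac)

lemma psd_smat: assumes "psd X" "0 \<le> r" shows "psd (smat (complex_of_real r) X)"
  using assms unfolding psd_qf qf_smat by simp

lemma psd_add: assumes "psd X" "psd Y" shows "psd (X + Y)"
  using assms unfolding psd_qf qf_add by simp

lemma mtr_adj_mult: "mtr (adj A ** B) = ci A B"
proof -
  have "mtr (adj A ** B) = (\<Sum>i\<in>UNIV. \<Sum>k\<in>UNIV. cnj (A $ k $ i) * B $ k $ i)"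
    by (simp add: mtr_def matrix_matrix_mult_def adj_def)
  also have "\<dots> = ci A B" unfolding ci_def by (rule sum.swap)
  finally show ?thesis .
qed

lemma ci_swap: "ci B A = cnj (ci A B)"
  unfolding ci_def by (simp add: mult.commute)

lemma ci_smat_right: "ci A (smat c B) = c * ci A B"
  unfolding ci_def smat_nth by (simp add: sum_distrib_left mult_ac)

lemma ci_smat_left: "ci (smat c A) B = cnj c * ci A B"
  unfolding ci_def smat_nth by (simp add: sum_distrib_left mult_ac)

lemma ci_add_left: "ci (A + B) C = ci A C + ci B C"
  unfolding ci_def by (simp add: distrib_right sum.distrib)

lemma ci_add_right: "ci A (B + C) = ci A B + ci A C"
  unfolding ci_def by (simp add: distrib_left sum.distrib)

lemma perp_iff: "A \<in> perp S \<longleftrightarrow> (\<forall>B\<in>S. ci A B = 0)"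
  unfolding perp_def mtr_adj_mult by simp

lemma perp_iff_inner: assumes "csubspace S"
  shows "A \<in> perp S \<longleftrightarrow> (\<forall>B\<in>S. inner B A = 0)"
proof
  assume a: "A \<in> perp S"
  show "\<forall>B\<in>S. inner B A = 0"
  proof
    fix B assume "B \<in> S"
    then have "ci A B = 0" using a unfolding perp_iff by blast
    then show "inner B A = 0" unfolding inner_mat ci_swap[of A B] by simp
  qed
next
  assume h: "\<forall>B\<in>S. inner B A = 0"
  have "ci A B = 0" if "B \<in> S" for B
  proof -
    have "smat \<i> B \<in> S" using assms that unfolding csubspace_def by blast
    then have "inner (smat \<i> B) A = 0" using h by blast
    then have "Re (ci A (smat \<i> B)) = 0" unfolding inner_mat ci_swap[of A "smat \<i> B"] by simp
    then have "Im (ci A B) = 0" unfolding ci_smat_right by simp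
    moreover have "Re (ci A B) = 0" using h that unfolding inner_mat ci_swap[of A B] by simp
    ultimately show ?thesis by (simp add: complex_eq_iff)
  qed
  then show "A \<in> perp S" unfolding perp_iff by blast
qed

lemma scaleR_mat: "c *\<^sub>R (A::complex^'m^'m) = smat (complex_of_real c) A"
  unfolding vec_eq_iff vector_scaleR_component smat_nth by (simp add: scaleR_conv_of_real)

lemma csubspace_subspace: assumes "csubspace S" shows "subspace S"
  using assms unfolding subspace_def csubspace_def scaleR_mat by blast

lemma perp_eq_orth: assumes "csubspace S" shows "perp S = orthogonal_comp S"
  using perp_iff_inner[OF assms] unfolding orthogonal_comp_def orthogonal_def by blast

lemma perp_perp: assumes "csubspace S" shows "orthogonal_comp (perp S) = S"
  unfolding perp_eq_orth[OF assms] using orthogonal_comp_self csubspace_subspace[OF assms] by blast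

lemma ci_zero_left: "ci 0 B = 0" by (simp add: ci_def)

lemma csubspace_perp: "csubspace (perp S)"
  unfolding csubspace_def
proof (intro conjI ballI allI)
  show "0 \<in> perp S" unfolding perp_iff by (simp add: ci_zero_left)
next
  fix A B assume "A \<in> perp S" "B \<in> perp S"
  then show "A + B \<in> perp S" unfolding perp_iff by (simp add: ci_add_left)
next
  fix c A assume "A \<in> perp S"
  then show "smat c A \<in> perp S" unfolding perp_iff by (simp add: ci_smat_left)
qed

lemma ci_adj_swap: "ci (adj A) B = cnj (ci A (adj B))"
proof -
  have "ci (adj A) B = (\<Sum>i\<in>UNIV. \<Sum>j\<in>UNIV. A $ j $ i * B $ i $ j)" by (simp add: ci_def adj_def)
  also have "\<dots> = (\<Sum>j\<in>UNIV. \<Sum>i\<in>UNIV. A $ j $ i * B $ i $ j)" by (rule sum.swap)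
  also have "\<dots> = cnj (ci A (adj B))" by (simp add: ci_def adj_def mult.commute)
  finally show ?thesis .
qed

lemma perp_adj: assumes "matricial_system S" "A \<in> perp S" shows "adj A \<in> perp S"
  using assms unfolding perp_iff matricial_system_def by (simp add: ci_adj_swap)

lemma ci_mat1: "ci Y (mat 1) = cnj (mtr Y)"
proof -
  have "ci Y (mat 1) = (\<Sum>i\<in>UNIV. \<Sum>j\<in>UNIV. if j = i then cnj (Y $ i $ j) else 0)"
    unfolding ci_def by (intro sum.cong refl) (auto simp: mat_def)
  also have "\<dots> = cnj (mtr Y)" by (simp add: mtr_def)
  finally show ?thesis .
qed

lemma perp_trace0: assumes "matricial_system S" "Y \<in> perp S" shows "mtr Y = 0"
proof -
  have "ci Y (mat 1) = 0" using assms unfolding perp_iff matricial_system_def by blast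
  then show ?thesis unfolding ci_mat1 by simp
qed



definition dlt :: "complex^('n::finite\<times>'n)^('n\<times>'n) \<Rightarrow> complex" where
  "dlt Z = (\<Sum>i\<in>UNIV. \<Sum>j\<in>UNIV. Z $ (i,i) $ (j,j))"

lemma ampl_iff: "Z \<in> ampl V \<longleftrightarrow> (\<forall>i j. blk Z i j \<in> V)"
  by (simp add: ampl_def blk_def)

lemma ci_blocks: "ci W Y = (\<Sum>i\<in>UNIV. \<Sum>j\<in>UNIV. ci (blk W i j) (blk Y i j))"
proof -
  have "ci W Y = (\<Sum>i\<in>UNIV. \<Sum>k\<in>UNIV. \<Sum>j\<in>UNIV. \<Sum>l\<in>UNIV. cnj (W $ (i,k) $ (j,l)) * Y $ (i,k) $ (j,l))"
    unfolding ci_def sum_pair by simp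
  also have "\<dots> = (\<Sum>i\<in>UNIV. \<Sum>j\<in>UNIV. \<Sum>k\<in>UNIV. \<Sum>l\<in>UNIV. cnj (W $ (i,k) $ (j,l)) * Y $ (i,k) $ (j,l))"
    by (intro sum.cong refl sum.swap)
  also have "\<dots> = (\<Sum>i\<in>UNIV. \<Sum>j\<in>UNIV. ci (blk W i j) (blk Y i j))"
    unfolding ci_def blk_nth by simp
  finally show ?thesis .
qed

lemma ampl_orth: assumes "csubspace S" "W \<in> ampl S" "Y \<in> ampl (perp S)"
  shows "inner W Y = 0"
proof -
  have "ci (blk W i j) (blk Y i j) = 0" for i j
  proof -
    have "ci (blk Y i j) (blk W i j) = 0" using assms unfolding ampl_iff perp_iff by blast
    then show ?thesis unfolding ci_swap[of "blk Y i j" "blk W i j"] by simp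
  qed
  then show ?thesis unfolding inner_mat ci_blocks by simp
qed

lemma idtensor_nth: "idtensor X $ p $ q = (if fst p = fst q then X $ snd p $ snd q else 0)"
  by (simp add: idtensor_def)

lemma sum_delta_outer: "(\<Sum>j\<in>(UNIV::'a::finite set). \<Sum>l\<in>UNIV. if i = j then F j l else 0) = (\<Sum>l\<in>UNIV. F i l)"
  by (simp add: sum_if_cond)

lemma sum_diag2: "(\<Sum>i\<in>(UNIV::'a::finite set). \<Sum>k\<in>UNIV. \<Sum>j\<in>(UNIV::'b::finite set). \<Sum>l\<in>UNIV. if j = l \<and> i = k then G i k j l else 0)
   = (\<Sum>i\<in>UNIV. \<Sum>j\<in>UNIV. G i i j j)"
proof -
  have e: "\<And>i k j l. (if j = l \<and> i = k then G i k j l else 0) = (if k = i then (if l = j then G i k j l else 0) else 0)"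
    by auto
  show ?thesis unfolding e by (simp add: sum_if_cond)
qed

lemma ci_idtensor: "ci X (idtensor X') = ci (ptrace1 X) X'"
proof -
  have "ci X (idtensor X') = (\<Sum>i\<in>UNIV. \<Sum>k\<in>UNIV. \<Sum>j\<in>UNIV. \<Sum>l\<in>UNIV. if i = j then cnj (X $ (i,k) $ (j,l)) * X' $ k $ l else 0)"
    unfolding ci_def sum_pair idtensor_nth by (intro sum.cong refl) auto
  also have "\<dots> = (\<Sum>i\<in>UNIV. \<Sum>k\<in>UNIV. \<Sum>l\<in>UNIV. cnj (X $ (i,k) $ (i,l)) * X' $ k $ l)"
    unfolding sum_delta_outer ..
  also have "\<dots> = (\<Sum>k\<in>UNIV. \<Sum>l\<in>UNIV. \<Sum>i\<in>UNIV. cnj (X $ (i,k) $ (i,l)) * X' $ k $ l)"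
    by (rule sum_swap3[symmetric])
  also have "\<dots> = ci (ptrace1 X) X'"
    unfolding ci_def ptrace1_def by (simp add: sum_distrib_right)
  finally show ?thesis .
qed

lemma mtr_Delta: "mtr (Z ** Delta) = dlt Z"
proof -
  have "mtr (Z ** Delta) = (\<Sum>i\<in>UNIV. \<Sum>k\<in>UNIV. \<Sum>j\<in>UNIV. \<Sum>l\<in>UNIV. if j = l \<and> i = k then Z $ (i,k) $ (j,l) else 0)"
    unfolding mtr_def matrix_matrix_mult_def sum_pair by (intro sum.cong refl) (auto simp: Delta_def mult_if1)
  also have "\<dots> = dlt Z" unfolding dlt_def sum_diag2 ..
  finally show ?thesis .
qed



lemma ci_Delta: "ci Delta Y = dlt Y"
proof -
  have "ci Delta Y = (\<Sum>i\<in>UNIV. \<Sum>k\<in>UNIV. \<Sum>j\<in>UNIV. \<Sum>l\<in>UNIV. if j = l \<and> i = k then Y $ (i,k) $ (j,l) else 0)"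
    unfolding ci_def sum_pair by (intro sum.cong refl) (auto simp: Delta_def)
  also have "\<dots> = dlt Y" unfolding dlt_def sum_diag2 ..
  finally show ?thesis .
qed

lemma dlt_add: "dlt (A + B) = dlt A + dlt B"
  by (simp add: dlt_def sum.distrib)

lemma dlt_idtensor: "dlt (idtensor X) = mtr X"
  by (simp add: dlt_def idtensor_nth mtr_def)

lemma inner_smat_left: "inner (smat (complex_of_real r) A) B = r * inner A B"
  by (simp add: scaleR_mat[symmetric])

lemma ci_mat1_left: "ci (mat 1) Z = mtr Z"
proof -
  have "ci (mat 1) Z = (\<Sum>i\<in>UNIV. \<Sum>j\<in>UNIV. if i = j then Z $ i $ j else 0)"
    unfolding ci_def by (intro sum.cong refl) (auto simp: mat_def)
  also have "\<dots> = mtr Z" by (simp add: mtr_def)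
  finally show ?thesis .
qed

lemma inner_mat1: "inner (mat 1) Z = Re (mtr Z)"
  by (simp add: inner_mat ci_mat1_left)

lemma weak_duality:
  fixes S :: "(complex^'n^'n) set"
  assumes ms: "matricial_system S"
    and p1: "ptrace1 X = smat (complex_of_real (1 - lam)) (mat 1)"
    and p2: "X + smat (complex_of_real lam) Delta \<in> ampl S" and p3: "psd X"
    and d1: "Y \<in> ampl (perp S)" and d2: "mtr ((idtensor X' + Y) ** Delta) = 1"
    and d3: "psd (idtensor X' + Y)"
  shows "lam \<le> Re (mtr X')"
proof -
  have cs: "csubspace S" using ms matricial_system_def by blast
  have "0 \<le> inner X (idtensor X' + Y)" using inner_psd_nonneg[OF p3 d3] .
  also have "inner X (idtensor X' + Y) = inner X (idtensor X') + inner X Y"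
    by (simp add: inner_add_right)
  also have "inner X (idtensor X') = (1 - lam) * Re (mtr X')"
  proof -
    have "inner X (idtensor X') = inner (ptrace1 X) X'" unfolding inner_mat ci_idtensor ..
    then show ?thesis unfolding p1 inner_smat_left inner_mat1 .
  qed
  also have "inner X Y = inner (X + smat (complex_of_real lam) Delta) Y - lam * inner Delta Y"
    by (simp add: inner_add_left inner_smat_left)
  also have "inner (X + smat (complex_of_real lam) Delta) Y = 0"
    using ampl_orth[OF cs p2 d1] .
  also have "inner Delta Y = 1 - Re (mtr X')"
  proof -
    have "dlt (idtensor X' + Y) = 1" using d2 unfolding mtr_Delta .
    then have "dlt Y = 1 - mtr X'" unfolding dlt_add dlt_idtensor by (simp add: algebra_simps)
    then show ?thesis unfolding inner_mat ci_Delta by simp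
  qed
  finally show ?thesis by (simp add: algebra_simps)
qed



lemma adj_nth: "adj A $ i $ j = cnj (A $ j $ i)" by (simp add: adj_def)
lemma adj_add: "adj (A + B) = adj A + adj B" by (simp add: vec_eq_iff adj_nth)
lemma adj_diff: "adj (A - B) = adj A - adj B" by (simp add: vec_eq_iff adj_nth)
lemma adj_smat: "adj (smat c A) = smat (cnj c) (adj A)" by (simp add: vec_eq_iff adj_nth smat_nth)
lemma adj_zero: "adj 0 = 0" by (simp add: vec_eq_iff adj_nth)
lemma adj_adj: "adj (adj A) = A" by (simp add: vec_eq_iff adj_nth)

lemma hermitian_iff2: "hermitian Z \<longleftrightarrow> (\<forall>i j. cnj (Z $ i $ j) = Z $ j $ i)"
  unfolding hermitian_iff by (metis complex_cnj_cnj)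

lemma hermitian_add: "hermitian A \<Longrightarrow> hermitian B \<Longrightarrow> hermitian (A + B)"
  by (simp add: hermitian_def adj_add)
lemma hermitian_diff: "hermitian A \<Longrightarrow> hermitian B \<Longrightarrow> hermitian (A - B)"
  by (simp add: hermitian_def adj_diff)
lemma hermitian_smat: "hermitian A \<Longrightarrow> hermitian (smat (complex_of_real r) A)"
  by (simp add: hermitian_def adj_smat)
lemma hermitian_zero: "hermitian 0" by (simp add: hermitian_def adj_zero)
lemma hermitian_scaleR: "hermitian A \<Longrightarrow> hermitian (r *\<^sub>R A)"
  by (simp add: scaleR_mat hermitian_smat)
lemma hermitian_Delta: "hermitian Delta"
  by (auto simp: hermitian_def vec_eq_iff adj_nth Delta_def)
lemma hermitian_mat1: "hermitian (mat 1)"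
  by (auto simp: hermitian_def vec_eq_iff adj_nth mat_def)
lemma hermitian_idtensor: "hermitian X \<Longrightarrow> hermitian (idtensor X)"
  unfolding hermitian_iff2 by (simp add: idtensor_nth)

lemma dlt_real: assumes "hermitian Z" shows "Im (dlt Z) = 0"
proof -
  have h: "\<And>i j. cnj (Z $ i $ j) = Z $ j $ i" using assms hermitian_iff by (metis complex_cnj_cnj)
  have "cnj (dlt Z) = (\<Sum>i\<in>UNIV. \<Sum>j\<in>UNIV. Z $ (j,j) $ (i,i))" by (simp add: dlt_def h)
  also have "\<dots> = dlt Z" unfolding dlt_def by (rule sum.swap)
  finally show ?thesis by (metis Reals_cnj_iff complex_is_Real_iff)
qed

lemma mtr_add: "mtr (A + B) = mtr A + mtr B" by (simp add: mtr_def sum.distrib)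

lemma mtr_idtensor: "mtr (idtensor (X::complex^'n^'n)) = of_nat CARD('n) * mtr X"
proof -
  have "mtr (idtensor X) = (\<Sum>i\<in>(UNIV::'n set). \<Sum>k\<in>UNIV. X $ k $ k)"
    unfolding mtr_def sum_pair by (simp add: idtensor_nth)
  also have "\<dots> = of_nat CARD('n) * mtr X" by (simp add: mtr_def)
  finally show ?thesis .
qed

lemma mtr_blocks: "mtr Y = (\<Sum>i\<in>UNIV. mtr (blk Y i i))"
  unfolding mtr_def sum_pair blk_nth ..

lemma mtr_ampl_perp: assumes "matricial_system S" "Y \<in> ampl (perp S)" shows "mtr Y = 0"
  unfolding mtr_blocks using perp_trace0[OF assms(1)] assms(2) unfolding ampl_iff by simp

lemma psd_zero: "psd 0" by (simp add: psd_qf qf_def)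

lemma qf_mat1: "qf (mat 1) v = (\<Sum>i\<in>UNIV. cnj (v $ i) * v $ i)"
proof -
  have "qf (mat 1) v = (\<Sum>i\<in>UNIV. \<Sum>j\<in>UNIV. if j = i then cnj (v $ i) * v $ j else 0)"
    unfolding qf_def by (intro sum.cong refl) (auto simp: mat_def)
  then show ?thesis by simp
qed

lemma psd_mat1: "psd (mat 1)"
  unfolding psd_qf qf_mat1 Im_sum Re_sum using cnj_mult_self by (simp add: sum_nonneg)

lemma inner_outer: "inner M (outer v) = Re (qf M v)"
  unfolding inner_mat ci_outer by simp

lemma ptrace1_add: "ptrace1 (A + B) = ptrace1 A + ptrace1 B"
  by (simp add: vec_eq_iff ptrace1_def sum.distrib)
lemma ptrace1_smat: "ptrace1 (smat c A) = smat c (ptrace1 A)"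
  by (simp add: vec_eq_iff ptrace1_def smat_nth sum_distrib_left)
lemma ptrace1_Delta: "ptrace1 Delta = mat 1"
proof -
  have "(\<Sum>i\<in>UNIV. Delta $ (i,k) $ (i,l)) = mat 1 $ k $ l" for k l
  proof -
    have "(\<Sum>i\<in>UNIV. Delta $ (i,k) $ (i,l)) = (\<Sum>i\<in>UNIV. if i = k then (if k = l then 1 else 0) else 0)"
      by (intro sum.cong refl) (auto simp: Delta_def)
    also have "\<dots> = mat 1 $ k $ l" by (simp add: mat_def)
    finally show ?thesis .
  qed
  then show ?thesis unfolding vec_eq_iff ptrace1_def vec_lambda_beta by blast
qed
lemma ptrace1_mat1: "ptrace1 (mat 1 :: complex^('n::finite\<times>'n)^('n\<times>'n)) = smat (of_nat CARD('n)) (mat 1)"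
  by (simp add: vec_eq_iff ptrace1_def mat_def smat_nth)

lemma blk_add: "blk (A + B) i j = blk A i j + blk B i j" by (simp add: vec_eq_iff blk_nth)
lemma blk_smat: "blk (smat c A) i j = smat c (blk A i j)" by (simp add: vec_eq_iff blk_nth smat_nth)
lemma blk_mat1: "blk (mat 1) i j = (if i = j then mat 1 else 0)" by (simp add: vec_eq_iff blk_nth mat_def)

lemma ampl_add: "csubspace V \<Longrightarrow> A \<in> ampl V \<Longrightarrow> B \<in> ampl V \<Longrightarrow> A + B \<in> ampl V"
  unfolding ampl_iff blk_add csubspace_def by blast
lemma ampl_smat: "csubspace V \<Longrightarrow> A \<in> ampl V \<Longrightarrow> smat c A \<in> ampl V"
  unfolding ampl_iff blk_smat csubspace_def by blast
lemma ampl_mat1: "matricial_system S \<Longrightarrow> mat 1 \<in> ampl S"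
  unfolding ampl_iff blk_mat1 matricial_system_def csubspace_def by simp
lemma ampl_zero: "csubspace V \<Longrightarrow> 0 \<in> ampl V"
  unfolding ampl_iff csubspace_def by (simp add: blk_def vec_eq_iff zero_vec_def)

definition fromblk :: "('n::finite \<Rightarrow> 'n \<Rightarrow> complex^'n^'n) \<Rightarrow> complex^('n\<times>'n)^('n\<times>'n)" where
  "fromblk F = (\<chi> p q. F (fst p) (fst q) $ snd p $ snd q)"

lemma blk_fromblk: "blk (fromblk F) a b = F a b" by (simp add: vec_eq_iff blk_nth fromblk_def)

lemma hermitian_fromblk: fixes F :: "'n::finite \<Rightarrow> 'n \<Rightarrow> complex^'n^'n" assumes "\<And>a b. F b a = adj (F a b)" shows "hermitian (fromblk F)"
  unfolding hermitian_iff2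
proof (intro allI)
  fix p q :: "'n \<times> 'n"
  have "F (fst q) (fst p) $ snd q $ snd p = adj (F (fst p) (fst q)) $ snd q $ snd p" using assms[of "fst p" "fst q"] by (simp add: adj_adj)
  then show "cnj (fromblk F $ p $ q) = fromblk F $ q $ p" unfolding fromblk_def adj_nth by simp
qed

lemma blk_herm: assumes "hermitian B" shows "blk B j i = adj (blk B i j)"
  using assms unfolding hermitian_iff2 by (simp add: vec_eq_iff blk_nth adj_nth)

lemma ci_adj_adj: "ci (adj D) (adj C) = cnj (ci D C)"
  unfolding ci_def adj_nth by (subst sum.swap) (simp add: mult.commute)

lemma psd_trace_zero: assumes "psd B" "Re (mtr B) = 0" shows "B = 0"
proof -
  have nn: "\<And>i. 0 \<le> Re (B $ i $ i)" using psd_diag[OF assms(1)] by blast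
  have "Re (mtr B) = (\<Sum>i\<in>UNIV. Re (B $ i $ i))" by (simp add: mtr_def Re_sum)
  then have "(\<Sum>i\<in>UNIV. Re (B $ i $ i)) = 0" using assms(2) by simp
  then have "\<forall>i\<in>UNIV. Re (B $ i $ i) = 0" using nn sum_nonneg_eq_0_iff[of UNIV "\<lambda>i. Re (B $ i $ i)"] by simp
  then have d: "B $ i $ i = 0" for i using psd_diag[OF assms(1), of i] by (simp add: complex_eq_iff)
  show ?thesis using psd_zero_row[OF assms(1) d] by (simp add: vec_eq_iff)
qed

lemma ptrace1_herm: assumes "hermitian B" shows "hermitian (ptrace1 B)"
  using assms unfolding hermitian_iff2 by (simp add: ptrace1_def)

lemma idtensor_mat1: "idtensor (mat 1) = mat 1"
  by (auto simp: vec_eq_iff idtensor_nth mat_def prod_eq_iff)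
lemma idtensor_smat: "idtensor (smat c X) = smat c (idtensor X)"
  by (simp add: vec_eq_iff idtensor_nth smat_nth)
lemma idtensor_zero: "idtensor 0 = 0"
  by (simp add: vec_eq_iff idtensor_nth)
lemma idtensor_scaleR: "idtensor (r *\<^sub>R X) = r *\<^sub>R idtensor X"
  by (simp add: scaleR_mat idtensor_smat)



definition Lset :: "(complex^'n^'n) set \<Rightarrow> (complex^('n::finite\<times>'n)^('n\<times>'n)) set" where
  "Lset S = {idtensor X + Y | X Y. hermitian X \<and> hermitian Y \<and> Y \<in> ampl (perp S)}"

definition Tset :: "(complex^'n^'n) set \<Rightarrow> real \<Rightarrow> ((complex^('n::finite\<times>'n)^('n\<times>'n)) \<times> real \<times> real) set" where
  "Tset S t = {(Z - z, Re (dlt Z) - 1, Re (mtr Z) - t) | Z z. psd Z \<and> z \<in> Lset S}"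

lemma Tset_mem: "psd Z \<Longrightarrow> z \<in> Lset S \<Longrightarrow> (Z - z, Re (dlt Z) - 1, Re (mtr Z) - t) \<in> Tset S t"
  unfolding Tset_def by blast

lemma ampl_perp_scaleR: "Y \<in> ampl (perp S) \<Longrightarrow> r *\<^sub>R Y \<in> ampl (perp S)"
  unfolding scaleR_mat using ampl_smat csubspace_perp by blast

lemma Lset_scaleR: assumes "z \<in> Lset S" shows "r *\<^sub>R z \<in> Lset S"
proof -
  obtain X Y where "z = idtensor X + Y" "hermitian X" "hermitian Y" "Y \<in> ampl (perp S)"
    using assms unfolding Lset_def by blast
  then have "r *\<^sub>R z = idtensor (r *\<^sub>R X) + r *\<^sub>R Y" "hermitian (r *\<^sub>R X)" "hermitian (r *\<^sub>R Y)"
     "r *\<^sub>R Y \<in> ampl (perp S)"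
    by (auto simp: idtensor_scaleR scaleR_add_right hermitian_scaleR ampl_perp_scaleR)
  then show ?thesis unfolding Lset_def by blast
qed

lemma Lset_add: assumes "z1 \<in> Lset S" "z2 \<in> Lset S" shows "z1 + z2 \<in> Lset S"
proof -
  obtain X1 Y1 where 1: "z1 = idtensor X1 + Y1" "hermitian X1" "hermitian Y1" "Y1 \<in> ampl (perp S)"
    using assms(1) unfolding Lset_def by blast
  obtain X2 Y2 where 2: "z2 = idtensor X2 + Y2" "hermitian X2" "hermitian Y2" "Y2 \<in> ampl (perp S)"
    using assms(2) unfolding Lset_def by blast
  have "idtensor (X1 + X2) = idtensor X1 + idtensor X2" by (simp add: vec_eq_iff idtensor_nth)
  then have "z1 + z2 = idtensor (X1 + X2) + (Y1 + Y2)" using 1 2 by (simp add: algebra_simps)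
  moreover have "hermitian (X1 + X2)" "hermitian (Y1 + Y2)" "Y1 + Y2 \<in> ampl (perp S)"
    using 1 2 hermitian_add ampl_add[OF csubspace_perp 1(4) 2(4)] by auto
  ultimately show ?thesis unfolding Lset_def by blast
qed

lemma Lset_herm: "z \<in> Lset S \<Longrightarrow> hermitian z"
  unfolding Lset_def using hermitian_add hermitian_idtensor by blast

lemma Lset_zero: fixes S :: "(complex^'n::finite^'n) set" shows "0 \<in> Lset S"
proof -
  have "(0::complex^('n\<times>'n)^('n\<times>'n)) = idtensor 0 + 0 \<and> hermitian (0::complex^'n^'n) \<and> hermitian (0::complex^('n\<times>'n)^('n\<times>'n)) \<and> (0::complex^('n\<times>'n)^('n\<times>'n)) \<in> ampl (perp S)"
    by (simp add: idtensor_zero hermitian_zero ampl_zero[OF csubspace_perp])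
  then show ?thesis unfolding Lset_def by blast
qed

lemma dlt_scaleR: "dlt (r *\<^sub>R A) = complex_of_real r * dlt A"
  by (simp only: dlt_def vector_scaleR_component) (simp add: scaleR_conv_of_real sum_distrib_left)
lemma mtr_scaleR: "mtr (r *\<^sub>R A) = complex_of_real r * mtr A"
  by (simp only: mtr_def vector_scaleR_component) (simp add: scaleR_conv_of_real sum_distrib_left)
lemma dlt_zero: "dlt 0 = 0" by (simp add: dlt_def)
lemma mtr_zero: "mtr 0 = 0" by (simp add: mtr_def)

lemma psd_scaleR: "psd Z \<Longrightarrow> 0 \<le> r \<Longrightarrow> psd (r *\<^sub>R Z)"
  by (simp add: scaleR_mat psd_smat)

lemma convex_Tset: "convex (Tset S t)"
  unfolding convex_def
proof (intro ballI allI impI)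
  fix x y and u v :: real
  assume x: "x \<in> Tset S t" and y: "y \<in> Tset S t" and uv: "0 \<le> u" "0 \<le> v" "u + v = 1"
  obtain Z1 z1 where 1: "x = (Z1 - z1, Re (dlt Z1) - 1, Re (mtr Z1) - t)" "psd Z1" "z1 \<in> Lset S"
    using x unfolding Tset_def by blast
  obtain Z2 z2 where 2: "y = (Z2 - z2, Re (dlt Z2) - 1, Re (mtr Z2) - t)" "psd Z2" "z2 \<in> Lset S"
    using y unfolding Tset_def by blast
  define Z where "Z = u *\<^sub>R Z1 + v *\<^sub>R Z2"
  define z where "z = u *\<^sub>R z1 + v *\<^sub>R z2"
  have pZ: "psd Z" unfolding Z_def using 1 2 uv psd_add psd_scaleR by blast
  have lz: "z \<in> Lset S" unfolding z_def using 1 2 Lset_add Lset_scaleR by blast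
  have e1: "u *\<^sub>R (Z1 - z1) + v *\<^sub>R (Z2 - z2) = Z - z"
    unfolding Z_def z_def by (simp add: algebra_simps)
  have e2: "u * (Re (dlt Z1) - 1) + v * (Re (dlt Z2) - 1) = Re (dlt Z) - 1"
    unfolding Z_def dlt_add dlt_scaleR using uv by (simp add: algebra_simps)
  have e3: "u * (Re (mtr Z1) - t) + v * (Re (mtr Z2) - t) = Re (mtr Z) - t"
  proof -
    have "u * (Re (mtr Z1) - t) + v * (Re (mtr Z2) - t)
        = u * Re (mtr Z1) + v * Re (mtr Z2) - (u + v) * t" by (simp add: algebra_simps)
    then show ?thesis unfolding Z_def mtr_add mtr_scaleR using uv by simp
  qed
  show "u *\<^sub>R x + v *\<^sub>R y \<in> Tset S t"
    unfolding 1 2 using Tset_mem[OF pZ lz, of t] e1 e2 e3 by simp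
qed



lemma zero_notin_T:
  fixes S :: "(complex^'n::finite^'n) set"
  assumes ms: "matricial_system S"
    and lt: "\<And>v. v \<in> {Re (mtr X) | X Y. hermitian X \<and> hermitian Y \<and> Y \<in> ampl (perp S) \<and>
                  mtr ((idtensor X + Y) ** Delta) = 1 \<and> psd (idtensor X + Y)} \<Longrightarrow> t < v"
  shows "0 \<notin> Tset S (real CARD('n) * t)"
proof
  assume "0 \<in> Tset S (real CARD('n) * t)"
  then obtain Z z where e: "0 = (Z - z, Re (dlt Z) - 1, Re (mtr Z) - real CARD('n) * t)" and pZ: "psd Z" and lz: "z \<in> Lset S"
    unfolding Tset_def by blast
  obtain X Y where z: "z = idtensor X + Y" and hX: "hermitian X" and hY: "hermitian Y" and Yp: "Y \<in> ampl (perp S)"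
    using lz unfolding Lset_def by blast
  have "Z - z = 0" using arg_cong[OF e, of fst] by simp
  then have Zz: "Z = z" by simp
  have "Re (dlt Z) - 1 = 0" "Re (mtr Z) - real CARD('n) * t = 0"
    using arg_cong[OF e, of "\<lambda>x. fst (snd x)"] arg_cong[OF e, of "\<lambda>x. snd (snd x)"] by simp_all
  then have d1: "Re (dlt Z) = 1" and m1: "Re (mtr Z) = real CARD('n) * t" by simp_all
  have "Im (dlt Z) = 0" using dlt_real psd_hermitian[OF pZ] by blast
  then have "dlt Z = 1" using d1 by (simp add: complex_eq_iff)
  then have md: "mtr ((idtensor X + Y) ** Delta) = 1" using Zz z mtr_Delta by metis
  have "mtr Z = of_nat CARD('n) * mtr X" unfolding Zz z mtr_add mtr_idtensor mtr_ampl_perp[OF ms Yp] by simp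
  then have "real CARD('n) * Re (mtr X) = real CARD('n) * t" using m1 by simp
  then have "Re (mtr X) = t" by simp
  moreover have "Re (mtr X) \<in> {Re (mtr X) | X Y. hermitian X \<and> hermitian Y \<and> Y \<in> ampl (perp S) \<and>
                  mtr ((idtensor X + Y) ** Delta) = 1 \<and> psd (idtensor X + Y)}"
    using hX hY Yp md pZ Zz z by blast
  ultimately show False using lt by fastforce
qed

lemma sep_ineq:
  assumes sep: "\<forall>x\<in>Tset S t'. 0 \<le> (B, \<beta>, \<gamma>) \<bullet> x" and "psd Z" "z \<in> Lset S"
  shows "0 \<le> inner B (Z - z) + \<beta> * (Re (dlt Z) - 1) + \<gamma> * (Re (mtr Z) - t')"
  using sep Tset_mem[OF assms(2,3), of t'] by auto

lemma sep_c0: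
  assumes sep: "\<forall>x\<in>Tset S t'. 0 \<le> (B, \<beta>, \<gamma>) \<bullet> x"
  shows "0 \<le> - \<beta> - \<gamma> * t'"
  using sep_ineq[OF sep psd_zero Lset_zero] by (simp add: dlt_zero mtr_zero)

lemma sep_orth:
  assumes sep: "\<forall>x\<in>Tset S t'. 0 \<le> (B, \<beta>, \<gamma>) \<bullet> x" and z0: "z0 \<in> Lset S"
  shows "inner B z0 = 0"
proof (rule ccontr)
  assume nz: "inner B z0 \<noteq> 0"
  define c0 where "c0 = - \<beta> - \<gamma> * t'"
  define s where "s = (c0 + 1) / inner B z0"
  from sep_ineq[OF sep psd_zero Lset_scaleR[OF z0, of s]]
  have "0 \<le> - s * inner B z0 + c0" unfolding c0_def by (simp add: dlt_zero mtr_zero)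
  also have "\<dots> = -1" unfolding s_def using nz by simp
  finally show False by simp
qed

lemma sep_psd:
  assumes sep: "\<forall>x\<in>Tset S t'. 0 \<le> (B, \<beta>, \<gamma>) \<bullet> x" and hB: "hermitian B"
  shows "psd (B + smat (complex_of_real \<beta>) Delta + smat (complex_of_real \<gamma>) (mat 1))" (is "psd ?M")
  unfolding psd_qf
proof
  fix v
  have hM: "hermitian ?M" using hB hermitian_add hermitian_smat hermitian_Delta hermitian_mat1 by metis
  define K where "K = inner B (outer v) + \<beta> * Re (dlt (outer v)) + \<gamma> * Re (mtr (outer v))"
  define c0 where "c0 = - \<beta> - \<gamma> * t'"
  have ineq: "0 \<le> s * K + c0" if "0 \<le> s" for s
  proof -
    have "0 \<le> inner B (s *\<^sub>R outer v - 0) + \<beta> * (Re (dlt (s *\<^sub>R outer v)) - 1) + \<gamma> * (Re (mtr (s *\<^sub>R outer v)) - t')"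
      using sep_ineq[OF sep psd_scaleR[OF psd_outer that] Lset_zero] .
    also have "\<dots> = s * K + c0" unfolding K_def c0_def dlt_scaleR mtr_scaleR
      by (simp add: algebra_simps)
    finally show ?thesis .
  qed
  have K0: "0 \<le> K"
  proof (rule ccontr)
    assume "\<not> 0 \<le> K"
    then have Kn: "K < 0" by simp
    have "0 \<le> c0" using sep_c0[OF sep] c0_def by simp
    define s where "s = (c0 + 1) / (- K)"
    have "0 \<le> s" unfolding s_def using Kn \<open>0 \<le> c0\<close> by (intro divide_nonneg_pos) auto
    then have "0 \<le> s * K + c0" by (rule ineq)
    also have "s * K + c0 = -1" unfolding s_def using Kn by (simp add: field_simps)
    finally show False by simp
  qed
  have "inner ?M (outer v) = K"
    unfolding K_def inner_add_left inner_smat_left inner_mat1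
    by (simp add: inner_mat ci_Delta)
  then have "0 \<le> Re (qf ?M v)" using K0 inner_outer by metis
  then show "Im (qf ?M v) = 0 \<and> 0 \<le> Re (qf ?M v)" using hermitian_qf_real[OF hM] by simp
qed



lemma mtr_mat1: "mtr (mat 1 :: complex^'n::finite^'n) = of_nat CARD('n)"
  by (simp add: mtr_def mat_def)

lemma Lset_idtensor: "hermitian X \<Longrightarrow> idtensor X \<in> Lset S"
proof -
  assume h: "hermitian X"
  have "idtensor X = idtensor X + 0" by simp
  then show ?thesis unfolding Lset_def using h hermitian_zero ampl_zero[OF csubspace_perp, of S] by blast
qed

lemma X1_facts:
  fixes S :: "(complex^'n::finite^'n) set"
  shows "hermitian (smat (complex_of_real (1 / real CARD('n))) (mat 1) :: complex^'n^'n)"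
    "idtensor (smat (complex_of_real (1 / real CARD('n))) (mat 1) :: complex^'n^'n) \<in> Lset S"
    "psd (idtensor (smat (complex_of_real (1 / real CARD('n))) (mat 1) :: complex^'n^'n))"
    "dlt (idtensor (smat (complex_of_real (1 / real CARD('n))) (mat 1) :: complex^'n^'n)) = 1"
    "mtr (idtensor (smat (complex_of_real (1 / real CARD('n))) (mat 1) :: complex^'n^'n)) = of_nat CARD('n)"
    "mtr (smat (complex_of_real (1 / real CARD('n))) (mat 1) :: complex^'n^'n) = 1"
proof -
  define X1 where "X1 = (smat (complex_of_real (1 / real CARD('n))) (mat 1) :: complex^'n^'n)"
  have h: "hermitian X1" unfolding X1_def using hermitian_smat hermitian_mat1 by blast
  have l: "idtensor X1 \<in> Lset S" using Lset_idtensor[OF h] .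
  have p: "psd (idtensor X1)" unfolding X1_def idtensor_smat idtensor_mat1
    by (rule psd_smat[OF psd_mat1]) simp
  have m: "mtr X1 = 1" unfolding X1_def by (simp add: mtr_def smat_nth mat_def)
  have d: "dlt (idtensor X1) = 1" unfolding dlt_idtensor m ..
  have t: "mtr (idtensor X1) = of_nat CARD('n)" unfolding mtr_idtensor m by simp
  show "hermitian (smat (complex_of_real (1 / real CARD('n))) (mat 1) :: complex^'n^'n)"
    "idtensor (smat (complex_of_real (1 / real CARD('n))) (mat 1) :: complex^'n^'n) \<in> Lset S"
    "psd (idtensor (smat (complex_of_real (1 / real CARD('n))) (mat 1) :: complex^'n^'n))"
    "dlt (idtensor (smat (complex_of_real (1 / real CARD('n))) (mat 1) :: complex^'n^'n)) = 1"
    "mtr (idtensor (smat (complex_of_real (1 / real CARD('n))) (mat 1) :: complex^'n^'n)) = of_nat CARD('n)"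
    "mtr (smat (complex_of_real (1 / real CARD('n))) (mat 1) :: complex^'n^'n) = 1"
    using h l p m d t unfolding X1_def by auto
qed

lemma X1_in_DS:
  fixes S :: "(complex^'n::finite^'n) set"
  shows "1 \<in> {Re (mtr X) | X Y. hermitian X \<and> hermitian Y \<and> Y \<in> ampl (perp S) \<and>
                  mtr ((idtensor X + Y) ** Delta) = 1 \<and> psd (idtensor X + Y)}"
proof -
  define X1 where "X1 = (smat (complex_of_real (1 / real CARD('n))) (mat 1) :: complex^'n^'n)"
  have f: "hermitian X1" "idtensor X1 \<in> Lset S" "psd (idtensor X1)" "dlt (idtensor X1) = 1"
    "mtr (idtensor X1) = of_nat CARD('n)" "mtr X1 = 1" unfolding X1_def by (rule X1_facts)+
  have "Re (mtr X1) = 1" "hermitian X1" "hermitian (0::complex^('n\<times>'n)^('n\<times>'n))" "(0::complex^('n\<times>'n)^('n\<times>'n)) \<in> ampl (perp S)"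
    "mtr ((idtensor X1 + 0) ** Delta) = 1" "psd (idtensor X1 + 0)"
    using f hermitian_zero ampl_zero[OF csubspace_perp] by (auto simp: mtr_Delta)
  then show ?thesis by (intro CollectI exI[of _ X1] exI[of _ "0::complex^('n\<times>'n)^('n\<times>'n)"]) auto
qed

lemma sep_gamma:
  fixes S :: "(complex^'n::finite^'n) set"
  assumes sep: "\<forall>x\<in>Tset S (real CARD('n) * t). 0 \<le> (B, \<beta>, \<gamma>) \<bullet> x" and t1: "t < 1"
  shows "0 \<le> \<gamma>" "\<gamma> = 0 \<Longrightarrow> \<beta> = 0"
proof -
  define n where "n = real CARD('n)"
  have npos: "0 < n" unfolding n_def by simp
  define X1 where "X1 = (smat (complex_of_real (1 / real CARD('n))) (mat 1) :: complex^'n^'n)"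
  have f: "hermitian X1" "idtensor X1 \<in> Lset S" "psd (idtensor X1)" "dlt (idtensor X1) = 1"
    "mtr (idtensor X1) = of_nat CARD('n)" "mtr X1 = 1" unfolding X1_def by (rule X1_facts)+
  have ineq: "0 \<le> \<beta> * (s - 1) + \<gamma> * (s * n - n * t)" if "0 \<le> s" for s
  proof -
    have "0 \<le> inner B (s *\<^sub>R idtensor X1 - s *\<^sub>R idtensor X1) + \<beta> * (Re (dlt (s *\<^sub>R idtensor X1)) - 1) + \<gamma> * (Re (mtr (s *\<^sub>R idtensor X1)) - real CARD('n) * t)"
      using sep_ineq[OF sep psd_scaleR[OF f(3) that] Lset_scaleR[OF f(2)]] .
    then show ?thesis unfolding dlt_scaleR mtr_scaleR f(4) f(5) n_def by simp
  qed
  have "0 \<le> \<gamma> * (n * (1 - t))" using ineq[of 1] by (simp add: algebra_simps)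
  moreover have "0 < n * (1 - t)" using npos t1 by simp
  ultimately show g: "0 \<le> \<gamma>" by (simp add: zero_le_mult_iff)
  assume "\<gamma> = 0"
  then have "0 \<le> \<beta>" "0 \<le> - \<beta>" using ineq[of 2] sep_c0[OF sep] by auto
  then show "\<beta> = 0" by simp
qed

lemma ptrace_B:
  fixes S :: "(complex^'n::finite^'n) set"
  assumes hB: "hermitian B" and orth: "\<And>z0. z0 \<in> Lset S \<Longrightarrow> inner B z0 = 0"
  shows "ptrace1 B = 0"
proof -
  define P where "P = ptrace1 B"
  have hP: "hermitian P" unfolding P_def using ptrace1_herm[OF hB] .
  have "inner B (idtensor P) = 0" using orth Lset_idtensor[OF hP] by blast
  then have "inner P P = 0" unfolding inner_mat ci_idtensor P_def .
  then show ?thesis unfolding P_def by simp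
qed

lemma sum_delta2: "(\<Sum>a\<in>(UNIV::'a::finite set). \<Sum>b\<in>(UNIV::'b::finite set). if a = i \<and> b = j then f a b else 0) = f i j"
proof -
  have e: "\<And>a b. (if a = i \<and> b = j then f a b else 0) = (if a = i then (if b = j then f a b else 0) else 0)" by auto
  show ?thesis unfolding e by (simp add: sum_if_cond)
qed

lemma ci_if_right: "ci D (if P then C else 0) = (if P then ci D C else 0)"
  by (simp add: ci_def)

lemma ampl_B:
  fixes S :: "(complex^'n::finite^'n) set"
  assumes ms: "matricial_system S" and hB: "hermitian B" and orth: "\<And>z0. z0 \<in> Lset S \<Longrightarrow> inner B z0 = 0"
  shows "B \<in> ampl S"
  unfolding ampl_iff
proof (intro allI)
  fix i j
  have cs: "csubspace S" using ms matricial_system_def by blast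
  have "inner C (blk B i j) = 0" if C: "C \<in> perp S" for C
  proof -
    define F where "F a b = (if a = i \<and> b = j then C else 0) + (if a = j \<and> b = i then adj C else 0)" for a b
    have adjF: "F b a = adj (F a b)" for a b
    proof -
      have e1: "adj (if a = i \<and> b = j then C else 0) = (if b = j \<and> a = i then adj C else 0)"
        by (simp add: adj_zero)
      have e2: "adj (if a = j \<and> b = i then adj C else 0) = (if b = i \<and> a = j then C else 0)"
        by (simp add: adj_zero adj_adj)
      show ?thesis unfolding F_def adj_add e1 e2 by (rule add.commute)
    qed
    have Fp: "F a b \<in> perp S" for a b
    proof -
      have "adj C \<in> perp S" using perp_adj[OF ms C] .
      moreover have "0 \<in> perp S" "\<And>A B. A \<in> perp S \<Longrightarrow> B \<in> perp S \<Longrightarrow> A + B \<in> perp S"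
        using csubspace_perp[of S] unfolding csubspace_def by blast+
      ultimately show ?thesis unfolding F_def using C by simp
    qed
    have hY: "hermitian (fromblk F)" by (rule hermitian_fromblk) (rule adjF)
    have Yp: "fromblk F \<in> ampl (perp S)" unfolding ampl_iff blk_fromblk using Fp by blast
    have "fromblk F \<in> Lset S"
    proof -
      have "fromblk F = idtensor 0 + fromblk F" by (simp add: idtensor_zero)
      then show ?thesis unfolding Lset_def using hY Yp hermitian_zero by blast
    qed
    then have z: "inner B (fromblk F) = 0" using orth by blast
    have "ci B (fromblk F) = (\<Sum>a\<in>UNIV. \<Sum>b\<in>UNIV. ci (blk B a b) (F a b))"
      unfolding ci_blocks blk_fromblk ..
    also have "\<dots> = (\<Sum>a\<in>UNIV. \<Sum>b\<in>UNIV. if a = i \<and> b = j then ci (blk B a b) C else 0)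
                 + (\<Sum>a\<in>UNIV. \<Sum>b\<in>UNIV. if a = j \<and> b = i then ci (blk B a b) (adj C) else 0)"
      unfolding F_def ci_add_right ci_if_right by (simp add: sum.distrib)
    also have "\<dots> = ci (blk B i j) C + ci (blk B j i) (adj C)" unfolding sum_delta2 ..
    also have "ci (blk B j i) (adj C) = cnj (ci (blk B i j) C)"
      unfolding blk_herm[OF hB, of j i] ci_adj_adj ..
    finally have "Re (ci B (fromblk F)) = 2 * Re (ci (blk B i j) C)" by simp
    then have "Re (ci (blk B i j) C) = 0" using z unfolding inner_mat by simp
    then show ?thesis unfolding inner_mat ci_swap[of "blk B i j" C] by simp
  qed
  then have "blk B i j \<in> orthogonal_comp (perp S)"
    unfolding orthogonal_comp_def orthogonal_def by blast
  then show "blk B i j \<in> S" unfolding perp_perp[OF cs] .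
qed



lemma primal_point:
  fixes S :: "(complex^'n::finite^'n) set"
  assumes ms: "matricial_system S" and pB: "ptrace1 B = 0" and aB: "B \<in> ampl S"
    and pM: "psd (B + smat (complex_of_real \<beta>) Delta + smat (complex_of_real \<gamma>) (mat 1))"
    and g: "0 < \<gamma>" and c0: "0 \<le> - \<beta> - \<gamma> * (real CARD('n) * t)"
  shows "\<exists>lam. (\<exists>X::complex^('n\<times>'n)^('n\<times>'n). ptrace1 X = smat (complex_of_real (1 - lam)) (mat 1) \<and>
                  X + smat (complex_of_real lam) Delta \<in> ampl S \<and> psd X) \<and> t \<le> lam"
proof -
  define n where "n = real CARD('n)"
  have npos: "0 < n" unfolding n_def by simp
  define c where "c = 1 / (\<gamma> * n)"
  define lam where "lam = - \<beta> / (\<gamma> * n)"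
  define M where "M = B + smat (complex_of_real \<beta>) Delta + smat (complex_of_real \<gamma>) (mat 1)"
  define X where "X = smat (complex_of_real c) M"
  have gn: "0 < \<gamma> * n" using g npos by simp
  have c0': "0 \<le> c" unfolding c_def using gn by simp
  have psdX: "psd X" unfolding X_def using psd_smat[OF pM[folded M_def] c0'] .
  have r1: "c * (\<beta> + \<gamma> * n) = 1 - lam" unfolding c_def lam_def using g npos by (simp add: add_divide_distrib)
  have r2: "c * \<beta> + lam = 0" unfolding c_def lam_def using gn by (simp add: field_simps)
  have r3: "c * \<gamma> = 1 / n" unfolding c_def using g npos by (simp add: field_simps)
  have "ptrace1 M = smat (complex_of_real (\<beta> + \<gamma> * n)) (mat 1)"
    unfolding M_def ptrace1_add ptrace1_smat pB ptrace1_Delta ptrace1_mat1 n_def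
    by (simp add: vec_eq_iff smat_nth algebra_simps)
  then have p1: "ptrace1 X = smat (complex_of_real (1 - lam)) (mat 1)"
    unfolding X_def ptrace1_smat r1[symmetric] by (simp add: vec_eq_iff smat_nth)
  have "X + smat (complex_of_real lam) Delta = smat (complex_of_real c) B + smat (complex_of_real (c * \<gamma>)) (mat 1)"
  proof -
    have "\<And>p q. complex_of_real c * (B $ p $ q + complex_of_real \<beta> * Delta $ p $ q + complex_of_real \<gamma> * mat 1 $ p $ q)
        + complex_of_real lam * Delta $ p $ q
        = complex_of_real c * B $ p $ q + complex_of_real (c * \<gamma>) * mat 1 $ p $ q
          + complex_of_real (c * \<beta> + lam) * Delta $ p $ q"
      by (simp add: algebra_simps)
    then show ?thesis unfolding X_def M_def using r2 by (simp add: vec_eq_iff smat_nth)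
  qed
  moreover have "smat (complex_of_real c) B + smat (complex_of_real (c * \<gamma>)) (mat 1) \<in> ampl S"
    using ms aB ampl_add ampl_smat ampl_mat1 matricial_system_def by metis
  ultimately have p2: "X + smat (complex_of_real lam) Delta \<in> ampl S" by simp
  have "t * (\<gamma> * n) \<le> - \<beta>" using c0 unfolding n_def by (simp add: algebra_simps)
  then have "t \<le> - \<beta> / (\<gamma> * n)" by (simp only: pos_le_divide_eq[OF gn])
  then have "t \<le> lam" unfolding lam_def .
  then show ?thesis using p1 p2 psdX by blast
qed



lemma subspace_HS: "subspace {x :: (complex^'m^'m) \<times> real \<times> real. hermitian (fst x)}"
  unfolding subspace_def by (auto simp: hermitian_zero hermitian_add hermitian_scaleR)

lemma strong_duality:
  fixes S :: "(complex^'n::finite^'n) set"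
  assumes ms: "matricial_system S"
    and lt: "\<And>v. v \<in> {Re (mtr X) | X Y. hermitian X \<and> hermitian Y \<and> Y \<in> ampl (perp S) \<and>
                  mtr ((idtensor X + Y) ** Delta) = 1 \<and> psd (idtensor X + Y)} \<Longrightarrow> t < v"
  shows "\<exists>lam. (\<exists>X::complex^('n\<times>'n)^('n\<times>'n). ptrace1 X = smat (complex_of_real (1 - lam)) (mat 1) \<and>
                  X + smat (complex_of_real lam) Delta \<in> ampl S \<and> psd X) \<and> t \<le> lam"
proof -
  define T where "T = Tset S (real CARD('n) * t)"
  have t1: "t < 1" using lt X1_in_DS[of S] by blast
  have cT: "convex T" unfolding T_def by (rule convex_Tset)
  have neT: "T \<noteq> {}" unfolding T_def using Tset_mem[OF psd_zero Lset_zero] by blast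
  have z: "0 \<notin> T" unfolding T_def using zero_notin_T[OF ms lt] by blast
  obtain a where aspan: "a \<in> span T" and anz: "a \<noteq> 0" and asep: "\<And>x. x \<in> T \<Longrightarrow> 0 \<le> a \<bullet> x"
    using separating_hyperplane_set_0_inspan[OF cT neT z] by blast
  obtain B \<beta> \<gamma> where a: "a = (B, \<beta>, \<gamma>)" by (cases a) auto
  have sep: "\<forall>x\<in>Tset S (real CARD('n) * t). 0 \<le> (B, \<beta>, \<gamma>) \<bullet> x" using asep unfolding a T_def by blast
  have "T \<subseteq> {x. hermitian (fst x)}"
  proof
    fix x assume "x \<in> T"
    then obtain Z z where x: "x = (Z - z, Re (dlt Z) - 1, Re (mtr Z) - real CARD('n) * t)" and pZ: "psd Z" and lz: "z \<in> Lset S"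
      unfolding T_def Tset_def by blast
    have "hermitian (Z - z)" using hermitian_diff[OF psd_hermitian[OF pZ] Lset_herm[OF lz]] .
    then show "x \<in> {x. hermitian (fst x)}" using x by simp
  qed
  then have "span T \<subseteq> {x. hermitian (fst x)}" using span_minimal subspace_HS by blast
  then have hB: "hermitian B" using aspan a by auto
  have orth: "\<And>z0. z0 \<in> Lset S \<Longrightarrow> inner B z0 = 0" using sep_orth[OF sep] by blast
  have pB: "ptrace1 B = 0" using ptrace_B[OF hB orth] .
  have aB: "B \<in> ampl S" using ampl_B[OF ms hB orth] .
  have pM: "psd (B + smat (complex_of_real \<beta>) Delta + smat (complex_of_real \<gamma>) (mat 1))"
    using sep_psd[OF sep hB] .
  have g0: "0 \<le> \<gamma>" using sep_gamma(1)[OF sep t1] .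
  have c0: "0 \<le> - \<beta> - \<gamma> * (real CARD('n) * t)" using sep_c0[OF sep] .
  show ?thesis
  proof (cases "\<gamma> = 0")
    case False
    then have "0 < \<gamma>" using g0 by simp
    then show ?thesis using primal_point[OF ms pB aB pM _ c0] by blast
  next
    case True
    then have b0: "\<beta> = 0" using sep_gamma(2)[OF sep t1] by blast
    have psdB: "psd B" using pM unfolding True b0 by (simp add: smat_zero_left)
    have "mat 1 \<in> Lset S" using Lset_idtensor[OF hermitian_mat1, of S] unfolding idtensor_mat1 .
    then have "inner B (mat 1) = 0" using orth by blast
    then have "Re (mtr B) = 0" unfolding inner_commute[of B] inner_mat1 .
    then have "B = 0" using psd_trace_zero[OF psdB] by blast
    then have "a = 0" unfolding a using True b0 by (simp add: zero_prod_def)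
    then show ?thesis using anz by blast
  qed
qed



lemma qf_Delta: "qf Delta v = cnj (\<Sum>i\<in>UNIV. v $ (i,i)) * (\<Sum>j\<in>UNIV. v $ (j,j))"
proof -
  have "qf Delta v = (\<Sum>i\<in>UNIV. \<Sum>k\<in>UNIV. \<Sum>j\<in>UNIV. \<Sum>l\<in>UNIV. if j = l \<and> i = k then cnj (v $ (i,k)) * v $ (j,l) else 0)"
    unfolding qf_def sum_pair by (intro sum.cong refl) (auto simp: Delta_def)
  also have "\<dots> = (\<Sum>i\<in>UNIV. \<Sum>j\<in>UNIV. cnj (v $ (i,i)) * v $ (j,j))" unfolding sum_diag2 ..
  also have "\<dots> = cnj (\<Sum>i\<in>UNIV. v $ (i,i)) * (\<Sum>j\<in>UNIV. v $ (j,j))" by (simp add: sum_product)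
  finally show ?thesis .
qed

lemma cs_card: "(\<Sum>i\<in>(UNIV::'a::finite set). a i)\<^sup>2 \<le> real CARD('a) * (\<Sum>i\<in>UNIV. (a i)\<^sup>2)"
  using Cauchy_Schwarz_ineq_sum[of a "\<lambda>_. 1" UNIV] by (simp add: mult.commute)

lemma psd_nI_Delta: "psd (smat (of_nat CARD('n)) (mat 1) - (Delta :: complex^('n::finite\<times>'n)^('n\<times>'n)))"
  unfolding psd_qf
proof
  fix v :: "complex^('n\<times>'n)"
  define s where "s = (\<Sum>i\<in>UNIV. v $ (i,i))"
  define n where "n = real CARD('n)"
  have q: "qf (smat (of_nat CARD('n)) (mat 1) - Delta) v = complex_of_real n * (\<Sum>p\<in>UNIV. cnj (v $ p) * v $ p) - cnj s * s"
    unfolding qf_diff qf_smat qf_mat1 qf_Delta s_def n_def by simp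
  have im: "Im (\<Sum>p\<in>UNIV. cnj (v $ p) * v $ p) = 0" unfolding Im_sum using cnj_mult_self by simp
  have re: "Re (\<Sum>p\<in>UNIV. cnj (v $ p) * v $ p) = (\<Sum>i\<in>UNIV. \<Sum>k\<in>UNIV. (cmod (v $ (i,k)))\<^sup>2)"
    unfolding Re_sum sum_pair by (simp add: cmod_power2) (simp add: power2_eq_square)
  have "cmod s \<le> (\<Sum>i\<in>UNIV. cmod (v $ (i,i)))" unfolding s_def by (rule norm_sum)
  then have "(cmod s)\<^sup>2 \<le> (\<Sum>i\<in>UNIV. cmod (v $ (i,i)))\<^sup>2" by (simp add: power_mono)
  also have "\<dots> \<le> n * (\<Sum>i\<in>UNIV. (cmod (v $ (i,i)))\<^sup>2)" unfolding n_def by (rule cs_card)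
  also have "\<dots> \<le> n * (\<Sum>i\<in>UNIV. \<Sum>k\<in>UNIV. (cmod (v $ (i,k)))\<^sup>2)"
  proof -
    have "(cmod (v $ (i,i)))\<^sup>2 \<le> (\<Sum>k\<in>UNIV. (cmod (v $ (i,k)))\<^sup>2)" for i
      using member_le_sum[of i UNIV "\<lambda>k. (cmod (v $ (i,k)))\<^sup>2"] by simp
    then show ?thesis unfolding n_def by (intro mult_left_mono sum_mono) auto
  qed
  finally have ineq: "(cmod s)\<^sup>2 \<le> n * (\<Sum>i\<in>UNIV. \<Sum>k\<in>UNIV. (cmod (v $ (i,k)))\<^sup>2)" .
  have "Re (cnj s * s) = (cmod s)\<^sup>2" by (simp add: cmod_power2) (simp add: power2_eq_square)
  moreover have "Im (cnj s * s) = 0" by simp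
  ultimately show "Im (qf (smat (of_nat CARD('n)) (mat 1) - Delta) v) = 0 \<and> 0 \<le> Re (qf (smat (of_nat CARD('n)) (mat 1) - Delta) v)"
    unfolding q using im re ineq by simp
qed

lemma ptrace1_diff: "ptrace1 (A - B) = ptrace1 A - ptrace1 B"
  by (simp add: vec_eq_iff ptrace1_def sum_subtractf)

lemma primal_pos:
  fixes S :: "(complex^'n::finite^'n) set"
  assumes ms: "matricial_system S"
  shows "\<exists>X::complex^('n\<times>'n)^('n\<times>'n). ptrace1 X = smat (complex_of_real (1 - 1 / (real CARD('n))\<^sup>2)) (mat 1) \<and>
                  X + smat (complex_of_real (1 / (real CARD('n))\<^sup>2)) Delta \<in> ampl S \<and> psd X"
proof -
  define n where "n = real CARD('n)"
  have npos: "0 < n" unfolding n_def by simp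
  define c where "c = 1 / n\<^sup>2"
  define N where "N = (of_nat CARD('n) :: complex)"
  have Nn: "N = complex_of_real n" unfolding N_def n_def by simp
  define X where "X = smat (complex_of_real c) (smat N (mat 1) - (Delta :: complex^('n\<times>'n)^('n\<times>'n)))"
  have "psd X" unfolding X_def c_def N_def by (rule psd_smat[OF psd_nI_Delta]) simp
  moreover have "ptrace1 X = smat (complex_of_real (1 - c)) (mat 1)"
  proof -
    have r: "c * (n * n - 1) = 1 - c" using npos unfolding c_def by (simp add: field_simps power2_eq_square)
    have sc: "complex_of_real c * (N * N - 1) = complex_of_real (1 - c)"
      unfolding Nn r[symmetric] by simp
    have "ptrace1 X = smat (complex_of_real c) (smat N (smat N (mat 1)) - mat 1)"
      unfolding X_def ptrace1_smat ptrace1_diff ptrace1_Delta ptrace1_mat1 N_def ..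
    also have "\<dots> = smat (complex_of_real c * (N * N - 1)) (mat 1)"
      by (simp add: vec_eq_iff smat_nth algebra_simps)
    finally show ?thesis unfolding sc .
  qed
  moreover have "X + smat (complex_of_real c) Delta = smat (complex_of_real c * N) (mat 1)"
    unfolding X_def by (simp add: vec_eq_iff smat_nth algebra_simps)
  moreover have "smat (complex_of_real c * N) (mat 1) \<in> ampl S"
    using ampl_smat ampl_mat1[OF ms] ms unfolding matricial_system_def by blast
  ultimately show ?thesis unfolding c_def n_def by auto
qed



lemma block_psd1: "block_psd (Suc 0) (\<lambda>i j. M) \<longleftrightarrow> psd M"
proof -
  have "block_psd (Suc 0) (\<lambda>i j. M) \<longleftrightarrow> (\<forall>v::nat \<Rightarrow> complex^'a. Im (qf M (v 0)) = 0 \<and> 0 \<le> Re (qf M (v 0)))"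
    unfolding block_psd_iff qf_def by simp
  also have "\<dots> \<longleftrightarrow> (\<forall>w. Im (qf M w) = 0 \<and> 0 \<le> Re (qf M w))"
  proof
    assume h: "\<forall>v::nat \<Rightarrow> complex^'a. Im (qf M (v 0)) = 0 \<and> 0 \<le> Re (qf M (v 0))"
    show "\<forall>w. Im (qf M w) = 0 \<and> 0 \<le> Re (qf M w)"
    proof
      fix w show "Im (qf M w) = 0 \<and> 0 \<le> Re (qf M w)" using h[rule_format, of "\<lambda>_. w"] by simp
    qed
  qed blast
  finally show ?thesis unfolding psd_qf .
qed

lemma smat_one: "smat 1 A = A" by (simp add: vec_eq_iff smat_nth)
lemma smat_smat: "smat c (smat d A) = smat (c * d) A" by (simp add: vec_eq_iff smat_nth)
lemma smat_diff_left: "smat c A - smat d A = smat (c - d) A" by (simp add: vec_eq_iff smat_nth algebra_simps)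

lemma smat1_mult: "smat (complex_of_real d) (mat 1) *v x = d *\<^sub>R x"
proof -
  have "(\<Sum>j\<in>UNIV. complex_of_real d * mat 1 $ i $ j * x $ j) = complex_of_real d * x $ i" for i
  proof -
    have "(\<Sum>j\<in>UNIV. complex_of_real d * mat 1 $ i $ j * x $ j) = (\<Sum>j\<in>UNIV. if j = i then complex_of_real d * x $ j else 0)"
      by (intro sum.cong refl) (auto simp: mat_def)
    then show ?thesis by simp
  qed
  moreover have "(d *\<^sub>R x) $ i = complex_of_real d * x $ i" for i
    by (simp only: vector_scaleR_component) (simp only: scaleR_conv_of_real)
  ultimately show ?thesis
    unfolding vec_eq_iff matrix_vector_mult_def vec_lambda_beta smat_nth by simp
qed

lemma opnorm_smat1: assumes "0 \<le> d" shows "opnorm (smat (complex_of_real d) (mat 1) :: complex^'n::finite^'n) = d"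
proof -
  have "opnorm (smat (complex_of_real d) (mat 1) :: complex^'n^'n) = onorm (\<lambda>x::complex^'n. d *\<^sub>R x)"
    unfolding opnorm_def smat1_mult ..
  also have "\<dots> = \<bar>d\<bar> * onorm (\<lambda>x::complex^'n. x)" by (rule onorm_scaleR[OF bounded_linear_ident])
  also have "\<dots> = d" using assms onorm_id[where 'a="complex^'n"] by simp
  finally show ?thesis .
qed

lemma psd_Delta: "psd Delta"
  unfolding psd_qf qf_Delta using cnj_mult_self by blast

lemma qf_smat1_axis: "qf (smat c (mat 1)) (axis a 1) = c"
  unfolding qf_axis smat_nth by (simp add: mat_def)

lemma feasible_to_primal:
  fixes S :: "(complex^'n::finite^'n) set" and \<phi> :: "complex^'n^'n \<Rightarrow> complex^'n^'n"
  assumes ms: "matricial_system S" and c1: "CP1 \<phi>" and r: "range \<phi> \<subseteq> S" and cp: "CP (\<lambda>A. \<phi> A - A)"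
  shows "\<exists>d. \<phi> (mat 1) = smat (complex_of_real d) (mat 1) \<and> 1 \<le> d \<and>
    (\<exists>X::complex^('n\<times>'n)^('n\<times>'n). ptrace1 X = smat (complex_of_real (1 - 1 / d)) (mat 1) \<and>
                  X + smat (complex_of_real (1 / d)) Delta \<in> ampl S \<and> psd X)"
proof -
  have cl: "clin \<phi>" using c1 unfolding CP1_def CP_def by blast
  obtain d0 where d0: "\<phi> (smat 1 (mat 1)) = smat d0 (mat 1)" using c1 unfolding CP1_def by blast
  then have e: "\<phi> (mat 1) = smat d0 (mat 1)" by (simp add: smat_one)
  have "block_psd (Suc 0) (\<lambda>i j. mat 1 :: complex^'n^'n)" using block_psd1 psd_mat1 by blast
  then have "block_psd (Suc 0) (\<lambda>i j. \<phi> (mat 1) - mat 1)" using cp unfolding CP_def by blast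
  then have "psd (smat d0 (mat 1) - mat 1 :: complex^'n^'n)" unfolding block_psd1 e .
  moreover have "smat d0 (mat 1) - mat 1 = (smat (d0 - 1) (mat 1) :: complex^'n^'n)"
    using smat_diff_left[of d0 "mat 1" 1] by (simp add: smat_one)
  ultimately have "psd (smat (d0 - 1) (mat 1) :: complex^'n^'n)" by simp
  then have "Im (qf (smat (d0 - 1) (mat 1) :: complex^'n^'n) (axis undefined 1)) = 0 \<and> 0 \<le> Re (qf (smat (d0 - 1) (mat 1) :: complex^'n^'n) (axis undefined 1))"
    unfolding psd_qf by blast
  then have im: "Im d0 = 0" and re: "1 \<le> Re d0" unfolding qf_smat1_axis by simp_all
  define d where "d = Re d0"
  have dd: "d0 = complex_of_real d" unfolding d_def using im by (simp add: complex_eq_iff)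
  have d1: "1 \<le> d" using re d_def by simp
  then have dpos: "0 < d" by simp
  define X where "X = smat (complex_of_real (1 / d)) (choi \<phi> - Delta)"
  have "psd (choi \<phi> - Delta)" using CP_choi_psd[OF cp] unfolding choi_minus_id .
  then have pX: "psd X" unfolding X_def using dpos by (intro psd_smat) auto
  have "ptrace1 X = smat (complex_of_real (1 / d)) (smat (complex_of_real d) (mat 1) - mat 1)"
    unfolding X_def ptrace1_smat ptrace1_diff ptrace1_choi[OF cl] ptrace1_Delta e dd ..
  also have "\<dots> = smat (complex_of_real (1 - 1 / d)) (mat 1)"
    using dpos by (simp add: vec_eq_iff smat_nth algebra_simps)
  finally have p1: "ptrace1 X = smat (complex_of_real (1 - 1 / d)) (mat 1)" .
  have "X + smat (complex_of_real (1 / d)) Delta = smat (complex_of_real (1 / d)) (choi \<phi>)"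
    unfolding X_def by (simp add: vec_eq_iff smat_nth algebra_simps)
  moreover have "choi \<phi> \<in> ampl S" unfolding ampl_iff blk_choi using r by blast
  moreover have cs: "csubspace S" using ms matricial_system_def by blast
  ultimately have p2: "X + smat (complex_of_real (1 / d)) Delta \<in> ampl S"
    using ampl_smat[OF cs] by simp
  have "\<phi> (mat 1) = smat (complex_of_real d) (mat 1)" using e dd by simp
  then show ?thesis using d1 p1 p2 pX by blast
qed



lemma primal_to_feasible:
  fixes S :: "(complex^'n::finite^'n) set" and X :: "complex^('n\<times>'n)^('n\<times>'n)"
  assumes ms: "matricial_system S" and lp: "0 < lam"
    and p1: "ptrace1 X = smat (complex_of_real (1 - lam)) (mat 1)"
    and p2: "X + smat (complex_of_real lam) Delta \<in> ampl S" and p3: "psd X"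
  shows "\<exists>\<phi>. CP1 \<phi> \<and> range \<phi> \<subseteq> S \<and> CP (\<lambda>A. \<phi> A - A) \<and> \<phi> (mat 1) = smat (complex_of_real (1 / lam)) (mat 1)"
proof -
  have cs: "csubspace S" using ms matricial_system_def by blast
  define W where "W = X + smat (complex_of_real lam) Delta"
  define C where "C = smat (complex_of_real (1 / lam)) W"
  define \<phi> where "\<phi> = phiC C"
  have pW: "psd W" unfolding W_def using psd_add[OF p3 psd_smat[OF psd_Delta]] lp by simp
  have pC: "psd C" unfolding C_def using lp by (intro psd_smat[OF pW]) auto
  have cp: "CP \<phi>" unfolding \<phi>_def using CP_phiC[OF pC] .
  have Ceq: "C = smat (complex_of_real (1 / lam)) X + Delta"
    unfolding C_def W_def using lp by (simp add: vec_eq_iff smat_nth algebra_simps)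
  have "(\<lambda>A. \<phi> A - A) = phiC (smat (complex_of_real (1 / lam)) X)"
    unfolding \<phi>_def Ceq phiC_add_left phiC_Delta by (simp add: fun_eq_iff)
  moreover have "psd (smat (complex_of_real (1 / lam)) X)" using lp by (intro psd_smat[OF p3]) auto
  ultimately have cp2: "CP (\<lambda>A. \<phi> A - A)" using CP_phiC by metis
  have rng: "range \<phi> \<subseteq> S"
  proof
    fix y assume "y \<in> range \<phi>"
    then obtain A where y: "y = \<phi> A" by blast
    have "blk C i j \<in> S" for i j
      using p2 cs unfolding C_def W_def[symmetric] ampl_iff blk_smat csubspace_def by blast
    then have sm: "smat (A $ i $ j) (blk C i j) \<in> S" for i j using cs unfolding csubspace_def by blast
    have inn: "(\<Sum>j\<in>UNIV. smat (A $ i $ j) (blk C i j)) \<in> S" for i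
      by (rule csubspace_sum[OF cs]) (simp_all add: sm)
    have "(\<Sum>i\<in>UNIV. \<Sum>j\<in>UNIV. smat (A $ i $ j) (blk C i j)) \<in> S"
      by (rule csubspace_sum[OF cs]) (simp_all add: inn)
    then show "y \<in> S" unfolding y \<phi>_def phiC_blocks .
  qed
  have one: "\<phi> (mat 1) = smat (complex_of_real (1 / lam)) (mat 1)"
  proof -
    have "\<phi> (mat 1) = smat (complex_of_real (1 / lam)) (smat (complex_of_real (1 - lam)) (mat 1) + smat (complex_of_real lam) (mat 1))"
      unfolding \<phi>_def phiC_one C_def W_def ptrace1_smat ptrace1_add p1 ptrace1_Delta ..
    also have "\<dots> = smat (complex_of_real (1 / lam)) (mat 1)"
      by (simp add: vec_eq_iff smat_nth algebra_simps)
    finally show ?thesis .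
  qed
  have cl: "clin \<phi>" using cp unfolding CP_def by blast
  have "\<forall>c. \<exists>d. \<phi> (smat c (mat 1)) = smat d (mat 1)"
  proof
    fix c
    have "\<phi> (smat c (mat 1)) = smat c (\<phi> (mat 1))" using cl unfolding clin_def by blast
    also have "\<dots> = smat (c * complex_of_real (1 / lam)) (mat 1)" unfolding one smat_smat ..
    finally show "\<exists>d. \<phi> (smat c (mat 1)) = smat d (mat 1)" by blast
  qed
  then have "CP1 \<phi>" unfolding CP1_def using cp by blast
  then show ?thesis using rng cp2 one by blast
qed



theorem proposition4p2:
  fixes S :: "(complex^'n^'n) set"
  assumes "matricial_system S"
  shows "inverse (Ind_CP S) =
           Inf {Re (mtr X) | X Y. hermitian X \<and> hermitian Y \<and> Y \<in> ampl (perp S) \<and>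
                  mtr ((idtensor X + Y) ** Delta) = 1 \<and> psd (idtensor X + Y)}
       \<and> Sup {lam::real. \<exists>X::complex^('n\<times>'n)^('n\<times>'n).
                  ptrace1 X = smat (complex_of_real (1 - lam)) (mat 1) \<and>
                  X + smat (complex_of_real lam) Delta \<in> ampl S \<and> psd X}
         = Inf {Re (mtr X) | X Y. hermitian X \<and> hermitian Y \<and> Y \<in> ampl (perp S) \<and>
                  mtr ((idtensor X + Y) ** Delta) = 1 \<and> psd (idtensor X + Y)}"
proof -
  note ms = assms
  define DS where "DS = {Re (mtr X) | X Y. hermitian X \<and> hermitian Y \<and> Y \<in> ampl (perp S) \<and>
                  mtr ((idtensor X + Y) ** Delta) = 1 \<and> psd (idtensor X + Y)}"
  define PS where "PS = {lam::real. \<exists>X::complex^('n\<times>'n)^('n\<times>'n).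
                  ptrace1 X = smat (complex_of_real (1 - lam)) (mat 1) \<and>
                  X + smat (complex_of_real lam) Delta \<in> ampl S \<and> psd X}"
  define D where "D = {opnorm (\<phi> (mat 1)) | \<phi>. CP1 \<phi> \<and> range \<phi> \<subseteq> S \<and> CP (\<lambda>A. \<phi> A - A)}"
  have Ind: "Ind_CP S = Inf D" unfolding Ind_CP_def D_def ..
  define n where "n = real CARD('n)"
  have npos: "0 < n" unfolding n_def by simp
  have F1: "1 \<le> d \<and> 1 / d \<in> PS" if dD: "d \<in> D" for d
  proof -
    obtain \<phi> where d: "d = opnorm (\<phi> (mat 1))" and f: "CP1 \<phi>" "range \<phi> \<subseteq> S" "CP (\<lambda>A. \<phi> A - A)"
      using dD unfolding D_def by blast
    obtain d' where e: "\<phi> (mat 1) = smat (complex_of_real d') (mat 1)" and d1: "1 \<le> d'"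
      and p: "\<exists>X::complex^('n\<times>'n)^('n\<times>'n). ptrace1 X = smat (complex_of_real (1 - 1 / d')) (mat 1) \<and>
                  X + smat (complex_of_real (1 / d')) Delta \<in> ampl S \<and> psd X"
      using feasible_to_primal[OF ms f] by blast
    have "opnorm (smat (complex_of_real d') (mat 1) :: complex^'n^'n) = d'"
      by (rule opnorm_smat1) (use d1 in simp)
    then have "d = d'" unfolding d e .
    then show ?thesis using d1 p unfolding PS_def by simp
  qed
  have F2: "1 / lam \<in> D" if lP: "lam \<in> PS" and lpos: "0 < lam" for lam
  proof -
    obtain X :: "complex^('n\<times>'n)^('n\<times>'n)" where "ptrace1 X = smat (complex_of_real (1 - lam)) (mat 1)"
      "X + smat (complex_of_real lam) Delta \<in> ampl S" "psd X"
      using lP unfolding PS_def by blast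
    then obtain \<phi> where f: "CP1 \<phi>" "range \<phi> \<subseteq> S" "CP (\<lambda>A. \<phi> A - A)"
      and e: "\<phi> (mat 1) = smat (complex_of_real (1 / lam)) (mat 1)"
      using primal_to_feasible[OF ms lpos] by blast
    have "opnorm (\<phi> (mat 1)) = 1 / lam" unfolding e by (rule opnorm_smat1) (use lpos in simp)
    then show ?thesis unfolding D_def using f by force
  qed
  have F3: "1 / n\<^sup>2 \<in> PS" unfolding PS_def n_def using primal_pos[OF ms] by simp
  have F4: "lam \<le> v" if lP: "lam \<in> PS" and vD: "v \<in> DS" for lam v
  proof -
    obtain X where p: "ptrace1 X = smat (complex_of_real (1 - lam)) (mat 1)"
      "X + smat (complex_of_real lam) Delta \<in> ampl S" "psd X"
      using lP unfolding PS_def by blast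
    obtain X' Y where v: "v = Re (mtr X')" "Y \<in> ampl (perp S)" "mtr ((idtensor X' + Y) ** Delta) = 1" "psd (idtensor X' + Y)"
      using vD unfolding DS_def by blast
    show ?thesis unfolding v(1) using weak_duality[OF ms p v(2-4)] .
  qed
  have F5: "\<exists>lam\<in>PS. t \<le> lam" if "\<And>v. v \<in> DS \<Longrightarrow> t < v" for t
    using strong_duality[OF ms that[unfolded DS_def]] unfolding PS_def by blast
  have DS1: "1 \<in> DS" unfolding DS_def using X1_in_DS .
  have PSne: "PS \<noteq> {}" using F3 by blast
  have DSne: "DS \<noteq> {}" using DS1 by blast
  have bPS: "bdd_above PS" unfolding bdd_above_def using F4 DS1 by blast
  have bDS: "bdd_below DS" unfolding bdd_below_def using F4 F3 by blast
  have pq1: "Sup PS \<le> Inf DS"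
    by (rule cSup_least[OF PSne]) (rule cInf_greatest[OF DSne], rule F4)
  have pq2: "Inf DS \<le> Sup PS"
  proof (rule ccontr)
    assume "\<not> Inf DS \<le> Sup PS"
    then have lt: "Sup PS < Inf DS" by simp
    define t where "t = (Sup PS + Inf DS) / 2"
    have "t < v" if "v \<in> DS" for v
      using cInf_lower[OF that bDS] lt unfolding t_def by simp
    then obtain lam where "lam \<in> PS" "t \<le> lam" using F5 by blast
    then have "t \<le> Sup PS" using cSup_upper[OF _ bPS] by fastforce
    then show False using lt unfolding t_def by simp
  qed
  have pq: "Sup PS = Inf DS" using pq1 pq2 by simp
  have Dne: "D \<noteq> {}" using F2[OF F3] npos by auto
  have bD: "bdd_below D" unfolding bdd_below_def using F1 by blast
  have I1: "1 \<le> Inf D" using cInf_greatest[OF Dne] F1 by blast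
  have ppos: "0 < Sup PS"
  proof -
    have "1 / n\<^sup>2 \<le> Sup PS" using cSup_upper[OF F3 bPS] .
    moreover have "0 < 1 / n\<^sup>2" using npos by simp
    ultimately show ?thesis by linarith
  qed
  have i1: "Sup PS \<le> 1 / Inf D"
  proof (rule cSup_least[OF PSne])
    fix lam assume lp: "lam \<in> PS"
    show "lam \<le> 1 / Inf D"
    proof (cases "0 < lam")
      case True
      have "Inf D \<le> 1 / lam" using cInf_lower[OF F2[OF lp True] bD] .
      then show ?thesis using True I1 by (simp add: field_simps)
    next
      case False
      then show ?thesis using I1 by (simp add: order_trans[of lam 0])
    qed
  qed
  have i2: "1 / Inf D \<le> Sup PS"
  proof -
    have "1 / Sup PS \<le> d" if "d \<in> D" for d
    proof -
      have "1 / d \<le> Sup PS" using cSup_upper[OF conjunct2[OF F1[OF that]] bPS] .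
      moreover have "1 \<le> d" using F1[OF that] by blast
      ultimately show ?thesis using ppos by (simp add: field_simps)
    qed
    then have "1 / Sup PS \<le> Inf D" using cInf_greatest[OF Dne] by blast
    then show ?thesis using ppos I1 by (simp add: field_simps)
  qed
  have "inverse (Ind_CP S) = Sup PS" unfolding Ind using i1 i2 by (simp add: inverse_eq_divide)
  then show ?thesis using pq unfolding DS_def PS_def by simp
qed


end
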